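(* For any stationary $\alpha$-mixing process $\mathbf X$ on $[0,1]^{\mathbb N}$ with distribution $\mu$ and $\alpha$-mixing coefficients $\boldsymbol\alpha$ satisfying $\|\boldsymbol\alpha\|<\infty$, \[\lim_{t\to\infty}\theta_t(\mathbf X)=\|\boldsymbol\alpha\|\quad\mu\text{-almost surely}.\]
   Context: $X_t$ is the $t$-th coordinate. $\alpha(\mathfrak U,\mathfrak V):=\sup_{U\in\mathfrak U,V\in\mathfrak V}|\mu(U\cap V)-\mu(U)\mu(V)|$; $\alpha(m):=\sup_{j}\alpha\big(\sigma(X_1,\dots,X_j),\sigma(X_t:t\ge j+m)\big)$; $\|\boldsymbol\alpha\|:=\sum_m\alpha(m)$; $\alpha$-mixing means $\alpha(m)\to0$. Dyadic sets: $I_{\ell,i}=[i2^{-\ell},(i+1)2^{-\ell})$, $i=0,\dots,2^\ell-1$ (last interval closed); $\Delta_{k,\ell}$ the cubes $I_{\ell,i_1}\times\cdots\times I_{\ell,i_k}$; $\mathcal D_{k,\ell}$ the unions of cubes of $\Delta_{k,\ell}$. Empirical estimator: for $n>m$, $j\in\{1,\dots,n-m\}$, $j':=n-m-j+1$, $\mu_t(\mathbf X,B):=\frac1t\sum_{i=0}^{t-1}\mathbf 1\{(X_{ik+1},\dots,X_{(i+1)k})\in B\}$ for $B\subseteq[0,1]^k$, $\gamma_{t,n}^{m,j}(\mathbf X,A,B):=\frac1t\sum_{i=0}^{t-1}\mathbf 1\{(X_{in+1},\dots,X_{in+j})\in A\}\mathbf 1\{(X_{in+j+m},\dots,X_{(i+1)n})\in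 B\}$, and $\widehat\alpha_{t,n}^{\ell}(\mathbf X,m):=\max_{j}\max_{A\in\mathcal D_{j,\ell},B\in\mathcal D_{j',\ell}}|\gamma_{t,n}^{m,j}(\mathbf X,A,B)-\mu_t(\mathbf X,A)\mu_t(\mathbf X,B)|$. Parameters: $(\ell_t),(n_t)$ non-decreasing unbounded sequences of positive integers; $(M_t)$ increasing sequence of positive integers with $n_t>M_t$; $(\delta_t)$ positive with $\sum_t\delta_t<\infty$; $(\epsilon_t)$ positive with $\epsilon_t\to0$. With $C_{M,\ell,n}:=M\cdot2^{2^{n\ell}+2^{M\ell+1}+1}$, let $\kappa_t:=\lceil C_{M_t,\ell_t,n_t}/(\epsilon_t^2\delta_t)\rceil$ and $\theta_t(\mathbf X):=\sum_{m=1}^{M_t}\widehat\alpha_{\kappa_t,n_t}^{\ell_t}(\mathbf X,m)$. *)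

theory Defs
  imports "HOL-Probability.Probability"
begin

(* Indexing convention: the paper's coordinate X_t (t >= 1) is  x (t - 1)  for a
   sample path  x :: nat => real. *)

definition path_space :: "(nat \<Rightarrow> real) measure" where
  "path_space = PiM UNIV (\<lambda>_. restrict_space borel {0..1::real})"

definition stationary :: "(nat \<Rightarrow> real) measure \<Rightarrow> bool" where
  "stationary \<mu> \<longleftrightarrow> distr \<mu> \<mu> (\<lambda>x i. x (Suc i)) = \<mu>"

definition coord_sigma :: "(nat \<Rightarrow> real) measure \<Rightarrow> nat set \<Rightarrow> (nat \<Rightarrow> real) set set" where
  "coord_sigma \<mu> I = sigma_sets (space \<mu>)
      {(\<lambda>x. x i) -` B \<inter> space \<mu> | i B. i \<in> I \<and> B \<in> sets borel}"

definition alpha_sets :: "(nat \<Rightarrow> real) measure \<Rightarrow> (nat \<Rightarrow> real) set set \<Rightarrow> (nat \<Rightarrow> real) set set \<Rightarrow> real" where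
  "alpha_sets \<mu> \<U> \<V> = (SUP UV \<in> \<U> \<times> \<V>.
      \<bar>measure \<mu> (fst UV \<inter> snd UV) - measure \<mu> (fst UV) * measure \<mu> (snd UV)\<bar>)"

(* alpha(m) = sup_j alpha(sigma(X_1..X_j), sigma(X_t : t >= j+m)), j >= 1;
   with 0-based coordinates and j = k+1: past {..k}, future {k+m..} *)
definition alpha_mix :: "(nat \<Rightarrow> real) measure \<Rightarrow> nat \<Rightarrow> real" where
  "alpha_mix \<mu> m = (SUP k. alpha_sets \<mu> (coord_sigma \<mu> {..k}) (coord_sigma \<mu> {k+m..}))"

definition alpha_norm :: "(nat \<Rightarrow> real) measure \<Rightarrow> real" where
  "alpha_norm \<mu> = (\<Sum>m. alpha_mix \<mu> (Suc m))"

definition alpha_summable :: "(nat \<Rightarrow> real) measure \<Rightarrow> bool" where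
  "alpha_summable \<mu> \<longleftrightarrow> summable (\<lambda>m. alpha_mix \<mu> (Suc m))"

definition dyadic_int :: "nat \<Rightarrow> nat \<Rightarrow> real set" where
  "dyadic_int l i = (if i = 2^l - 1 then {real i / 2^l .. (real i + 1) / 2^l}
                     else {real i / 2^l ..< (real i + 1) / 2^l})"

(* vectors of [0,1]^k are lists of length k *)
definition dyadic_cube :: "nat \<Rightarrow> nat \<Rightarrow> nat list \<Rightarrow> real list set" where
  "dyadic_cube k l c = {v. length v = k \<and> (\<forall>r<k. v ! r \<in> dyadic_int l (c ! r))}"

definition cube_indices :: "nat \<Rightarrow> nat \<Rightarrow> nat list set" where
  "cube_indices k l = {c. length c = k \<and> (\<forall>r<k. c ! r < 2^l)}"

definition Delta :: "nat \<Rightarrow> nat \<Rightarrow> real list set set" where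
  "Delta k l = dyadic_cube k l ` cube_indices k l"

definition Dcal :: "nat \<Rightarrow> nat \<Rightarrow> real list set set" where
  "Dcal k l = {\<Union> S | S. S \<subseteq> Delta k l}"

definition block :: "(nat \<Rightarrow> real) \<Rightarrow> nat \<Rightarrow> nat \<Rightarrow> real list" where
  "block x s k = map (\<lambda>r. x (s + r)) [0..<k]"

definition emp_mu :: "nat \<Rightarrow> (nat \<Rightarrow> real) \<Rightarrow> nat \<Rightarrow> real list set \<Rightarrow> real" where
  "emp_mu t x k B = (1 / real t) * (\<Sum>i<t. indicator B (block x (i*k) k))"

definition emp_gamma :: "nat \<Rightarrow> nat \<Rightarrow> nat \<Rightarrow> nat \<Rightarrow> (nat \<Rightarrow> real) \<Rightarrow> real list set \<Rightarrow> real list set \<Rightarrow> real" where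
  "emp_gamma t n m j x A B = (1 / real t) * (\<Sum>i<t.
      indicator A (block x (i*n) j) * indicator B (block x (i*n + j + m - 1) (n - m - j + 1)))"

definition alpha_hat :: "nat \<Rightarrow> nat \<Rightarrow> nat \<Rightarrow> (nat \<Rightarrow> real) \<Rightarrow> nat \<Rightarrow> real" where
  "alpha_hat t n l x m = Max ((\<lambda>(j, A, B).
        \<bar>emp_gamma t n m j x A B - emp_mu t x j A * emp_mu t x (n - m - j + 1) B\<bar>)
      ` {(j, A, B). j \<in> {1..n-m} \<and> A \<in> Dcal j l \<and> B \<in> Dcal (n - m - j + 1) l})"

definition C_const :: "nat \<Rightarrow> nat \<Rightarrow> nat \<Rightarrow> real" where
  "C_const M l n = real M * 2 ^ (2^(n*l) + 2^(M*l+1) + 1)"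

definition kappa :: "(nat \<Rightarrow> nat) \<Rightarrow> (nat \<Rightarrow> nat) \<Rightarrow> (nat \<Rightarrow> nat) \<Rightarrow> (nat \<Rightarrow> real) \<Rightarrow> (nat \<Rightarrow> real) \<Rightarrow> nat \<Rightarrow> nat" where
  "kappa l n M \<epsilon> \<delta> t = nat \<lceil>C_const (M t) (l t) (n t) / ((\<epsilon> t)^2 * \<delta> t)\<rceil>"

definition theta :: "(nat \<Rightarrow> nat) \<Rightarrow> (nat \<Rightarrow> nat) \<Rightarrow> (nat \<Rightarrow> nat) \<Rightarrow> (nat \<Rightarrow> real) \<Rightarrow> (nat \<Rightarrow> real) \<Rightarrow> nat \<Rightarrow> (nat \<Rightarrow> real) \<Rightarrow> real" where
  "theta l n M \<epsilon> \<delta> t x = (\<Sum>m=1..M t. alpha_hat (kappa l n M \<epsilon> \<delta> t) (n t) (l t) x m)"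

end

theory Submission
  imports Defs
begin

definition idx :: "nat \<Rightarrow> real \<Rightarrow> nat" where
  "idx l y = nat (min \<lfloor>y * 2^l\<rfloor> (2^l - 1))"

definition ubox :: "nat \<Rightarrow> real list set" where
  "ubox K = {v. length v = K \<and> (\<forall>r<K. 0 \<le> v!r \<and> v!r \<le> 1)}"

lemma idx_lt: "idx l y < 2^l"
proof -
  have "min \<lfloor>y * 2^l\<rfloor> (2^l - 1) \<le> 2^l - 1" by simp
  then show ?thesis unfolding idx_def by (simp add: nat_less_iff)
qed

lemma mem_dyadic_int_iff:
  assumes y: "0 \<le> y" "y \<le> 1" and i: "i < 2^l"
  shows "y \<in> dyadic_int l i \<longleftrightarrow> idx l y = i"
proof -
  define N :: nat where "N = 2^l"
  define F where "F = \<lfloor>y * 2^l\<rfloor>"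
  have p: "(0::real) < 2^l" by simp
  have NR: "(2::real)^l = real N" and NI: "(2::int)^l = int N" by (simp_all add: N_def)
  have N1: "N \<ge> 1" by (simp add: N_def)
  have F0: "0 \<le> F" unfolding F_def using y by simp
  have idxe: "idx l y = i \<longleftrightarrow> min F (int N - 1) = int i"
  proof -
    have "0 \<le> min F (int N - 1)" using F0 N1 by simp
    then show ?thesis unfolding idx_def F_def[symmetric] NI by (simp add: nat_eq_iff)
  qed
  have iff1: "real i / 2^l \<le> y \<longleftrightarrow> int i \<le> F"
    unfolding F_def le_floor_iff using p by (simp add: pos_divide_le_eq)
  have iff2: "y < (real i + 1) / 2^l \<longleftrightarrow> F < int i + 1"
    unfolding F_def floor_less_iff using p by (simp add: pos_less_divide_eq)
  have iN: "int i < int N" using i by (simp add: N_def)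
  show ?thesis
  proof (cases "i = 2^l - 1")
    case True
    then have iN1: "int i = int N - 1" using N1 by (simp add: N_def of_nat_diff)
    have "(real i + 1) / 2^l = 1" using True p by (simp add: of_nat_diff)
    then have "y \<in> dyadic_int l i \<longleftrightarrow> int i \<le> F"
      using True y iff1 by (simp add: dyadic_int_def)
    also have "\<dots> \<longleftrightarrow> min F (int N - 1) = int i" using iN1 by (simp add: min_def) presburger
    finally show ?thesis using idxe by simp
  next
    case False
    then have "i < N - 1" using i by (simp add: N_def)
    then have "int i < int (N - 1)" by linarith
    then have iN1: "int i < int N - 1" using N1 by (simp add: of_nat_diff)
    have "y \<in> dyadic_int l i \<longleftrightarrow> int i \<le> F \<and> F < int i + 1"
      using False iff1 iff2 by (simp add: dyadic_int_def)
    also have "\<dots> \<longleftrightarrow> min F (int N - 1) = int i" using iN1 by (auto simp: min_def)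
    finally show ?thesis using idxe by simp
  qed
qed

lemma dyadic_int_sub: "i < 2^l \<Longrightarrow> y \<in> dyadic_int l i \<Longrightarrow> 0 \<le> y \<and> y \<le> 1"
proof -
  assume i: "i < 2^l" and y: "y \<in> dyadic_int l i"
  have p: "(0::real) < 2^l" by simp
  have "real i + 1 \<le> 2^l" using i
    by (metis Suc_eq_plus1 Suc_leI of_nat_1 of_nat_add of_nat_le_iff of_nat_numeral of_nat_power)
  then have a: "(real i + 1) / 2^l \<le> 1" using p by simp
  have b: "0 \<le> real i / 2^l" by simp
  have "real i / 2^l \<le> y \<and> y \<le> (real i + 1) / 2^l"
    using y by (auto simp: dyadic_int_def split: if_splits)
  then show ?thesis using a b by linarith
qed

lemma dyadic_cube_eq:
  assumes "c \<in> cube_indices K l"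
  shows "dyadic_cube K l c = {v \<in> ubox K. map (idx l) v = c}"
proof -
  have c: "length c = K" "\<And>r. r < K \<Longrightarrow> c!r < 2^l" using assms by (auto simp: cube_indices_def)
  show ?thesis
  proof (intro set_eqI iffI)
    fix v assume v: "v \<in> dyadic_cube K l c"
    then have v1: "length v = K" "\<And>r. r<K \<Longrightarrow> v!r \<in> dyadic_int l (c!r)" by (auto simp: dyadic_cube_def)
    have v2: "\<And>r. r<K \<Longrightarrow> 0 \<le> v!r \<and> v!r \<le> 1" using v1 c dyadic_int_sub by blast
    have "\<And>r. r<K \<Longrightarrow> idx l (v!r) = c!r" using v1 v2 c mem_dyadic_int_iff by blast
    then show "v \<in> {v \<in> ubox K. map (idx l) v = c}"
      using v1 v2 c by (auto simp: ubox_def intro!: nth_equalityI)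
  next
    fix v assume v: "v \<in> {v \<in> ubox K. map (idx l) v = c}"
    then have v1: "length v = K" "\<And>r. r<K \<Longrightarrow> 0 \<le> v!r \<and> v!r \<le> 1" "map (idx l) v = c"
      by (auto simp: ubox_def)
    have "\<And>r. r<K \<Longrightarrow> idx l (v!r) = c!r" using v1 by auto
    then have "\<And>r. r<K \<Longrightarrow> v!r \<in> dyadic_int l (c!r)" using v1 c mem_dyadic_int_iff by blast
    then show "v \<in> dyadic_cube K l c" using v1 by (auto simp: dyadic_cube_def)
  qed
qed

lemma map_idx_cube: "v \<in> ubox K \<Longrightarrow> map (idx l) v \<in> cube_indices K l"
  by (auto simp: ubox_def cube_indices_def idx_lt)

lemma Dcal_char: "A \<in> Dcal K l \<longleftrightarrow> (\<exists>Q. A = {v \<in> ubox K. map (idx l) v \<in> Q})"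
proof
  assume "A \<in> Dcal K l"
  then obtain S where S: "A = \<Union>S" "S \<subseteq> Delta K l" by (auto simp: Dcal_def)
  define Q where "Q = {c \<in> cube_indices K l. dyadic_cube K l c \<in> S}"
  have "\<Union>S = {v \<in> ubox K. map (idx l) v \<in> Q}"
  proof (intro set_eqI iffI)
    fix v assume "v \<in> \<Union>S"
    then obtain C where C: "v \<in> C" "C \<in> S" by auto
    then obtain c where c: "c \<in> cube_indices K l" "C = dyadic_cube K l c" using S by (auto simp: Delta_def)
    then show "v \<in> {v \<in> ubox K. map (idx l) v \<in> Q}" using C dyadic_cube_eq[OF c(1)] by (auto simp: Q_def)
  next
    fix v assume v: "v \<in> {v \<in> ubox K. map (idx l) v \<in> Q}"
    then have "map (idx l) v \<in> cube_indices K l" "dyadic_cube K l (map (idx l) v) \<in> S"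
      by (auto simp: Q_def)
    moreover have "v \<in> dyadic_cube K l (map (idx l) v)"
      using dyadic_cube_eq[OF calculation(1)] v by auto
    ultimately show "v \<in> \<Union>S" by blast
  qed
  then show "\<exists>Q. A = {v \<in> ubox K. map (idx l) v \<in> Q}" using S by blast
next
  assume "\<exists>Q. A = {v \<in> ubox K. map (idx l) v \<in> Q}"
  then obtain Q where Q: "A = {v \<in> ubox K. map (idx l) v \<in> Q}" by blast
  define S where "S = dyadic_cube K l ` (Q \<inter> cube_indices K l)"
  have "S \<subseteq> Delta K l" by (auto simp: S_def Delta_def)
  moreover have "A = \<Union>S"
  proof (intro set_eqI iffI)
    fix v assume v: "v \<in> A"
    then have c: "map (idx l) v \<in> Q \<inter> cube_indices K l" using Q map_idx_cube by auto
    then have "v \<in> dyadic_cube K l (map (idx l) v)" using dyadic_cube_eq[of "map (idx l) v"] v Q by auto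
    then show "v \<in> \<Union>S" using c by (auto simp: S_def)
  next
    fix v assume "v \<in> \<Union>S"
    then obtain c where "c \<in> Q \<inter> cube_indices K l" "v \<in> dyadic_cube K l c" by (auto simp: S_def)
    then show "v \<in> A" using dyadic_cube_eq[of c] Q by auto
  qed
  ultimately show "A \<in> Dcal K l" by (auto simp: Dcal_def)
qed

lemma Dcal_intro: "{v \<in> ubox K. map (idx l) v \<in> Q} \<in> Dcal K l"
  using Dcal_char by blast

lemma finite_cube_indices: "finite (cube_indices K l)"
  and card_cube_indices: "card (cube_indices K l) = 2^(K*l)"
proof -
  have e: "cube_indices K l = {xs. set xs \<subseteq> {..<2^l} \<and> length xs = K}"
  proof (intro set_eqI iffI)
    fix xs :: "nat list" assume "xs \<in> {xs. set xs \<subseteq> {..<2^l} \<and> length xs = K}"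
    then have a: "set xs \<subseteq> {..<2^l}" "length xs = K" by auto
    have "\<forall>r<K. xs!r < 2^l"
    proof (intro allI impI)
      fix r assume "r < K"
      then have "xs!r \<in> set xs" using a(2) by simp
      then show "xs!r < 2^l" using a(1) by auto
    qed
    then show "xs \<in> cube_indices K l" unfolding cube_indices_def using a by simp
  qed (auto simp: cube_indices_def in_set_conv_nth)
  show "finite (cube_indices K l)" unfolding e by (rule finite_lists_length_eq) simp
  show "card (cube_indices K l) = 2^(K*l)" unfolding e
    by (subst card_lists_length_eq) (simp_all add: power_mult[symmetric] mult.commute)
qed

lemma finite_Dcal: "finite (Dcal K l)"
  and card_Dcal: "card (Dcal K l) \<le> 2^(2^(K*l))"
proof -
  have fD: "finite (Delta K l)" using finite_cube_indices by (simp add: Delta_def)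
  have e: "Dcal K l = Union ` Pow (Delta K l)" by (auto simp: Dcal_def)
  show "finite (Dcal K l)" unfolding e using fD by simp
  have "card (Dcal K l) \<le> card (Pow (Delta K l))" unfolding e using fD by (intro card_image_le) simp
  also have "\<dots> = 2 ^ card (Delta K l)" using fD by (simp add: card_Pow)
  also have "\<dots> \<le> 2 ^ card (cube_indices K l)"
    unfolding Delta_def using finite_cube_indices by (intro power_increasing card_image_le) auto
  finally show "card (Dcal K l) \<le> 2^(2^(K*l))" by (simp add: card_cube_indices)
qed

lemma aux_div:
  fixes a d :: nat
  assumes a: "1 \<le> a" and d: "1 \<le> d"
  shows "(a*d - 1) div d = a - 1"
proof (rule div_nat_eqI)
  have ad: "1 \<le> a*d" using a d by simp
  have "d * (a - 1) = d*a - d*1" by (rule diff_mult_distrib2)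
  then have "d * (a - 1) = a*d - d" by (simp add: mult.commute)
  then show "d * (a - 1) \<le> a*d - 1" using d by linarith
  have "d * Suc (a - 1) = a*d" using a by (simp add: mult.commute)
  then show "a*d - 1 < d * Suc (a - 1)" using ad by linarith
qed

lemma idx_refine:
  assumes y: "0 \<le> y" "y \<le> 1" and ll: "l \<le> l'"
  shows "idx l y = idx l' y div 2^(l'-l)"
proof (cases "y = 1")
  case True
  have "idx l' 1 = 2^l' - 1" unfolding idx_def
    by (simp add: min_def nat_diff_distrib' del: of_int_power) (metis floor_of_nat nat_int of_nat_numeral of_nat_power)
  moreover have "idx l 1 = 2^l - 1" unfolding idx_def
    by (simp add: min_def nat_diff_distrib' del: of_int_power) (metis floor_of_nat nat_int of_nat_numeral of_nat_power)
  moreover have "(2^l' - 1) div 2^(l'-l) = (2^l - 1::nat)"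
  proof -
    have e: "(2::nat)^l' = 2^l * 2^(l'-l)" using ll by (simp add: power_add[symmetric])
    have "(2^l * 2^(l'-l) - 1) div 2^(l'-l) = (2^l - 1::nat)"
      by (rule aux_div) simp_all
    then show ?thesis using e by simp
  qed
  ultimately show ?thesis using True by simp
next
  case False
  then have y1: "y < 1" using y by simp
  have fl_lt: "\<And>k. \<lfloor>y * 2^k\<rfloor> \<le> 2^k - 1"
  proof -
    fix k :: nat
    have "y * 2^k < 2^k" using y1 by simp
    then have "\<lfloor>y * 2^k\<rfloor> < 2^k"
      by (metis floor_less_iff of_int_numeral of_int_power)
    then show "\<lfloor>y * 2^k\<rfloor> \<le> 2^k - 1" by simp
  qed
  have i1: "idx l y = nat \<lfloor>y * 2^l\<rfloor>" unfolding idx_def using fl_lt[of l] by (simp add: min_def)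
  have i2: "idx l' y = nat \<lfloor>y * 2^l'\<rfloor>" unfolding idx_def using fl_lt[of l'] by (simp add: min_def)
  have e: "(2::real)^l' = 2^(l'-l) * 2^l" using ll by (simp add: power_add[symmetric])
  have "y * 2^l = y * 2^l' / real_of_int (2^(l'-l))" by (simp add: e)
  then have "\<lfloor>y * 2^l\<rfloor> = \<lfloor>y * 2^l'\<rfloor> div 2^(l'-l)"
    using floor_divide_real_eq_div[of "2^(l'-l)" "y * 2^l'"] by simp
  moreover have "\<lfloor>y * 2^l'\<rfloor> \<ge> 0" using y by simp
  ultimately show ?thesis unfolding i1 i2
    by (simp add: nat_div_distrib nat_power_eq)
qed


lemma sum_inj_le_suminf:
  fixes g :: "nat \<Rightarrow> real"
  assumes "finite F" "inj_on h F" "summable g" "\<And>d. 0 \<le> g d"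
  shows "(\<Sum>k\<in>F. g (h k)) \<le> suminf g"
proof -
  have "(\<Sum>k\<in>F. g (h k)) = (\<Sum>d\<in>h ` F. g d)"
    using sum.reindex[OF assms(2), of g] by simp
  also have "\<dots> \<le> suminf g"
    by (rule sum_le_suminf) (use assms in auto)
  finally show ?thesis .
qed

lemma row_bound:
  fixes c \<beta> :: "nat \<Rightarrow> real"
  assumes it: "i < t" and ci: "\<bar>c i\<bar> \<le> 1"
    and lo: "\<And>k. k < i \<Longrightarrow> \<bar>c k\<bar> \<le> \<beta> (i - k)"
    and hi: "\<And>k. i < k \<Longrightarrow> k < t \<Longrightarrow> \<bar>c k\<bar> \<le> \<beta> (k - i)"
    and b0: "\<And>d. 0 \<le> \<beta> d" and sb: "summable (\<lambda>d. \<beta> (Suc d))"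
  shows "(\<Sum>k<t. \<bar>c k\<bar>) \<le> 1 + 2 * (\<Sum>d. \<beta> (Suc d))"
proof -
  have e: "{..<t} = insert i ({..<i} \<union> {i<..<t})" using it by auto
  have "(\<Sum>k<t. \<bar>c k\<bar>) = \<bar>c i\<bar> + ((\<Sum>k<i. \<bar>c k\<bar>) + (\<Sum>k\<in>{i<..<t}. \<bar>c k\<bar>))"
    unfolding e by (subst sum.insert) (auto intro: sum.union_disjoint)
  also have "(\<Sum>k<i. \<bar>c k\<bar>) \<le> (\<Sum>k<i. \<beta> (Suc (i - Suc k)))"
    by (rule sum_mono) (use lo in \<open>auto simp: Suc_diff_Suc\<close>)
  also have "\<dots> \<le> (\<Sum>d. \<beta> (Suc d))"
    by (rule sum_inj_le_suminf[where g = "\<lambda>d. \<beta> (Suc d)"]) (use sb b0 in \<open>auto simp: inj_on_def\<close>)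
  also have "(\<Sum>k\<in>{i<..<t}. \<bar>c k\<bar>) \<le> (\<Sum>k\<in>{i<..<t}. \<beta> (Suc (k - Suc i)))"
    by (rule sum_mono) (use hi in \<open>auto simp: Suc_diff_Suc\<close>)
  also have "\<dots> \<le> (\<Sum>d. \<beta> (Suc d))"
    by (rule sum_inj_le_suminf[where g = "\<lambda>d. \<beta> (Suc d)"]) (use sb b0 in \<open>auto simp: inj_on_def\<close>)
  finally show ?thesis using ci by linarith
qed

context prob_space
begin

lemma ind_integrable: "A \<in> events \<Longrightarrow> integrable M (indicator A :: 'a \<Rightarrow> real)"
  by (rule integrable_real_indicator) (auto simp: less_top[symmetric])

lemma cross_integral:
  assumes A: "A \<in> events" and B: "B \<in> events"
  shows "(\<integral>x. (indicator A x - p) * (indicator B x - p) \<partial>M) = prob (A \<inter> B) - p * prob A - p * prob B + p * p"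
proof -
  have e: "(\<lambda>x. (indicator A x - p) * (indicator B x - p)) =
      (\<lambda>x. indicator (A \<inter> B) x - p * indicator A x - p * indicator B x + p * p :: real)"
    by (auto simp: fun_eq_iff indicator_inter_arith algebra_simps)
  have AB: "A \<inter> B \<in> events" using A B by auto
  show ?thesis unfolding e using A B AB
    by (simp add: ind_integrable Int_absorb2 sets.sets_into_space prob_space)
qed

lemma cross_integrable:
  assumes A: "A \<in> events" and B: "B \<in> events"
  shows "integrable M (\<lambda>x. (indicator A x - p) * (indicator B x - p) :: real)"
proof -
  have e: "(\<lambda>x. (indicator A x - p) * (indicator B x - p)) =
      (\<lambda>x. indicator (A \<inter> B) x - p * indicator A x - p * indicator B x + p * p :: real)"
    by (auto simp: fun_eq_iff indicator_inter_arith algebra_simps)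
  have AB: "A \<inter> B \<in> events" using A B by auto
  show ?thesis unfolding e using A B AB
    by (intro Bochner_Integration.integrable_add Bochner_Integration.integrable_diff
        integrable_mult_right ind_integrable) auto
qed

lemma conc:
  fixes E :: "nat \<Rightarrow> 'a set" and t :: nat and p \<eta> :: real and \<beta> :: "nat \<Rightarrow> real"
  assumes t: "0 < t" and E: "\<And>i. i < t \<Longrightarrow> E i \<in> events"
    and pE: "\<And>i. i < t \<Longrightarrow> prob (E i) = p"
    and cov: "\<And>i k. i < k \<Longrightarrow> k < t \<Longrightarrow> \<bar>prob (E i \<inter> E k) - p * p\<bar> \<le> \<beta> (k - i)"
    and b0: "\<And>d. 0 \<le> \<beta> d" and sb: "summable (\<lambda>d. \<beta> (Suc d))" and \<eta>: "0 < \<eta>"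
  shows "prob {x \<in> space M. \<eta> \<le> \<bar>(1 / real t) * (\<Sum>i<t. indicator (E i) x) - p\<bar>}
    \<le> (1 + 2 * (\<Sum>d. \<beta> (Suc d))) / (real t * \<eta>\<^sup>2)"
proof -
  define f where "f x = (1 / real t) * (\<Sum>i<t. indicator (E i) x :: real)" for x
  define S where "S = (\<Sum>d. \<beta> (Suc d))"
  have Emeas: "\<And>i. i < t \<Longrightarrow> indicator (E i) \<in> borel_measurable M"
    using E by (intro borel_measurable_indicator) auto
  have Eint: "\<And>i. i < t \<Longrightarrow> integrable M (indicator (E i) :: 'a \<Rightarrow> real)"
    using E by (simp add: ind_integrable)
  have fmeas: "f \<in> borel_measurable M"
    unfolding f_def using Emeas by (intro borel_measurable_times borel_measurable_const borel_measurable_sum) auto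
  have fb: "0 \<le> f x \<and> f x \<le> 1" for x
  proof -
    have "(\<Sum>i<t. indicator (E i) x :: real) \<le> (\<Sum>i<t. 1)" by (rule sum_mono) (simp add: indicator_def)
    moreover have "0 \<le> (\<Sum>i<t. indicator (E i) x :: real)" by (rule sum_nonneg) simp
    ultimately show ?thesis using t by (simp add: f_def field_simps)
  qed
  have f2int: "integrable M (\<lambda>x. f x ^ 2)"
  proof (rule integrable_const_bound[where B = 1])
    show "AE x in M. norm (f x ^ 2) \<le> 1" using fb by (auto simp: abs_le_iff power_le_one)
  qed (use fmeas in simp)
  have p01: "0 \<le> p \<and> p \<le> 1" using pE[OF t] by auto
  have Ef: "expectation f = p"
  proof -
    have "expectation f = (1 / real t) * (\<Sum>i<t. prob (E i))"
      unfolding f_def using Eint E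
      by (simp add: Bochner_Integration.integral_sum Int_absorb2 sets.sets_into_space)
    also have "\<dots> = p" using pE t by simp
    finally show ?thesis .
  qed
  define c where "c i k = prob (E i \<inter> E k) - p * p" for i k
  have fsq: "(f x - p)\<^sup>2 = (1 / real t)\<^sup>2 * (\<Sum>i<t. \<Sum>k<t. (indicator (E i) x - p) * (indicator (E k) x - p))" for x
  proof -
    have "f x - p = (1 / real t) * (\<Sum>i<t. (indicator (E i) x - p))"
      unfolding f_def using t by (simp add: sum_subtractf field_simps)
    then show ?thesis by (simp add: power2_eq_square sum_product algebra_simps)
  qed
  have crossint: "\<And>i k. i < t \<Longrightarrow> k < t \<Longrightarrow> integrable M (\<lambda>x. (indicator (E i) x - p) * (indicator (E k) x - p))"
    using E by (intro cross_integrable) auto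
  have var: "variance f = (1 / real t)\<^sup>2 * (\<Sum>i<t. \<Sum>k<t. c i k)"
  proof -
    have "variance f = (\<integral>x. (1 / real t)\<^sup>2 * (\<Sum>i<t. \<Sum>k<t. (indicator (E i) x - p) * (indicator (E k) x - p)) \<partial>M)"
      unfolding Ef fsq ..
    also have "\<dots> = (1 / real t)\<^sup>2 * (\<Sum>i<t. \<Sum>k<t. (\<integral>x. (indicator (E i) x - p) * (indicator (E k) x - p) \<partial>M))"
    proof -
      have "(\<integral>x. (\<Sum>i<t. \<Sum>k<t. (indicator (E i) x - p) * (indicator (E k) x - p)) \<partial>M)
          = (\<Sum>i<t. (\<integral>x. (\<Sum>k<t. (indicator (E i) x - p) * (indicator (E k) x - p)) \<partial>M))"
        by (rule Bochner_Integration.integral_sum) (use crossint in \<open>auto intro!: Bochner_Integration.integrable_sum\<close>)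
      also have "\<dots> = (\<Sum>i<t. \<Sum>k<t. (\<integral>x. (indicator (E i) x - p) * (indicator (E k) x - p) \<partial>M))"
        by (intro sum.cong refl Bochner_Integration.integral_sum) (use crossint in auto)
      finally show ?thesis by simp
    qed
    also have "\<dots> = (1 / real t)\<^sup>2 * (\<Sum>i<t. \<Sum>k<t. c i k)"
      using E pE by (simp add: cross_integral c_def)
    finally show ?thesis .
  qed
  have row: "(\<Sum>k<t. \<bar>c i k\<bar>) \<le> 1 + 2 * S" if i: "i < t" for i
    unfolding S_def
  proof (rule row_bound[OF i _ _ _ b0 sb])
    have "p * p \<le> p" using p01 mult_left_le[of p p] by simp
    moreover have "0 \<le> p * p" by simp
    ultimately have "0 \<le> p - p * p" "p - p * p \<le> 1" using p01 by linarith+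
    moreover have "c i i = p - p * p" using pE[OF i] by (simp add: c_def)
    ultimately show "\<bar>c i i\<bar> \<le> 1" by simp
    show "\<bar>c i k\<bar> \<le> \<beta> (i - k)" if "k < i" for k
      using cov[of k i] that i by (simp add: c_def Int_commute)
    show "\<bar>c i k\<bar> \<le> \<beta> (k - i)" if "i < k" "k < t" for k
      using cov[of i k] that by (simp add: c_def)
  qed
  have "(\<Sum>i<t. \<Sum>k<t. c i k) \<le> (\<Sum>i<t. \<Sum>k<t. \<bar>c i k\<bar>)"
    by (intro sum_mono) simp
  also have "\<dots> \<le> (\<Sum>i<t. 1 + 2 * S)" by (rule sum_mono) (use row in simp)
  also have "\<dots> = real t * (1 + 2 * S)" by simp
  finally have ss: "(\<Sum>i<t. \<Sum>k<t. c i k) \<le> real t * (1 + 2 * S)" .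
  have vb: "variance f \<le> (1 + 2 * S) / real t"
  proof -
    have "variance f \<le> (1 / real t)\<^sup>2 * (real t * (1 + 2 * S))"
      unfolding var by (rule mult_left_mono[OF ss]) simp
    also have "\<dots> = (1 + 2 * S) / real t" using t by (simp add: power2_eq_square field_simps)
    finally show ?thesis .
  qed
  have "prob {x \<in> space M. \<eta> \<le> \<bar>f x - expectation f\<bar>} \<le> variance f / \<eta>\<^sup>2"
    by (rule Chebyshev_inequality[OF fmeas f2int \<eta>])
  also have "\<dots> \<le> ((1 + 2 * S) / real t) / \<eta>\<^sup>2"
    using vb \<eta> by (intro divide_right_mono) simp_all
  finally show ?thesis unfolding Ef f_def S_def by (simp add: field_simps)
qed

end


context prob_space
begin

lemma approx_sigma:
  assumes sub: "\<A> \<subseteq> events" and ne: "a0 \<in> \<A>"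
    and compl: "\<And>a. a \<in> \<A> \<Longrightarrow> space M - a \<in> \<A>"
    and un: "\<And>a b. a \<in> \<A> \<Longrightarrow> b \<in> \<A> \<Longrightarrow> a \<union> b \<in> \<A>"
  shows "U \<in> sigma_sets (space M) \<A> \<Longrightarrow> 0 < \<epsilon> \<Longrightarrow> \<exists>G\<in>\<A>. prob ((U - G) \<union> (G - U)) < \<epsilon>"
proof (induction arbitrary: \<epsilon> rule: sigma_sets.induct)
  case (Basic a)
  then show ?case by (intro bexI[of _ a]) auto
next
  case Empty
  have "space M - a0 \<union> a0 = space M" using ne sub sets.sets_into_space by blast
  then have "space M \<in> \<A>" using un[OF compl[OF ne] ne] by simp
  then have "{} \<in> \<A>" using compl[of "space M"] by simp
  then show ?case using Empty by (intro bexI[of _ "{}"]) auto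
next
  case (Compl a)
  obtain G where G: "G \<in> \<A>" "prob ((a - G) \<union> (G - a)) < \<epsilon>" using Compl by blast
  have aS: "a \<subseteq> space M" using Compl(1) sigma_sets_into_sp[of \<A> "space M"] sub sets.sets_into_space
    by blast
  have GS: "G \<subseteq> space M" using G sub sets.sets_into_space by blast
  have "((space M - a) - (space M - G)) \<union> ((space M - G) - (space M - a)) = (a - G) \<union> (G - a)"
    using aS GS by blast
  then show ?case using G compl by (intro bexI[of _ "space M - G"]) auto
next
  case (Union A)
  have sig: "sigma_sets (space M) \<A> \<subseteq> events" using sub by (rule sets.sigma_sets_subset)
  have Ae: "\<And>i. A i \<in> events" using Union(1) sig by blast
  define B where "B n = (\<Union>i<n. A i)" for n
  have Be: "B n \<in> events" for n unfolding B_def using Ae by auto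
  have "incseq B" unfolding B_def incseq_def by (auto intro: less_le_trans)
  moreover have "(\<Union>n. B n) = (\<Union>i. A i)" unfolding B_def by auto
  ultimately have lim: "(\<lambda>n. prob (B n)) \<longlonglongrightarrow> prob (\<Union>i. A i)"
    using finite_Lim_measure_incseq[of B] Be by auto
  have "0 < \<epsilon> / 2" using Union by simp
  from lim[THEN tendstoD, OF this] obtain N where N: "\<And>n. n \<ge> N \<Longrightarrow> dist (prob (B n)) (prob (\<Union>i. A i)) < \<epsilon> / 2"
    unfolding eventually_sequentially by blast
  define n where "n = Suc N"
  have n0: "0 < n" by (simp add: n_def)
  have "\<bar>prob (B n) - prob (\<Union>i. A i)\<bar> < \<epsilon> / 2" using N[of n] by (simp add: n_def dist_real_def)
  then have close: "prob (\<Union>i. A i) - prob (B n) < \<epsilon> / 2" by linarith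
  have "0 < \<epsilon> / (2 * real n)" using Union n0 by simp
  then have "\<forall>i. \<exists>G\<in>\<A>. prob ((A i - G) \<union> (G - A i)) < \<epsilon> / (2 * real n)" using Union(2) by blast
  then obtain Gf where Gf: "\<And>i. Gf i \<in> \<A>" "\<And>i. prob ((A i - Gf i) \<union> (Gf i - A i)) < \<epsilon> / (2 * real n)"
    by metis
  have GA: "(\<Union>i<Suc k. Gf i) \<in> \<A>" for k
  proof (induction k)
    case 0
    have "(\<Union>i<Suc 0. Gf i) = Gf 0" by auto
    then show ?case using Gf(1)[of 0] by simp
  next
    case (Suc k)
    have "(\<Union>i<Suc (Suc k). Gf i) = Gf (Suc k) \<union> (\<Union>i<Suc k. Gf i)" by (auto simp: lessThan_Suc)
    then show ?case using un[OF Gf(1) Suc] by simp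
  qed
  define G where "G = (\<Union>i<n. Gf i)"
  have G: "G \<in> \<A>" unfolding G_def n_def by (rule GA)
  have Gfe: "\<And>i. Gf i \<in> events" using Gf sub by blast
  define D where "D i = (A i - Gf i) \<union> (Gf i - A i)" for i
  have De: "D i \<in> events" for i unfolding D_def using Ae Gfe by auto
  have sub2: "((\<Union>i. A i) - G) \<union> (G - (\<Union>i. A i)) \<subseteq> ((\<Union>i. A i) - B n) \<union> (\<Union>i<n. D i)"
    unfolding G_def B_def D_def by blast
  have "prob (((\<Union>i. A i) - G) \<union> (G - (\<Union>i. A i))) \<le> prob (((\<Union>i. A i) - B n) \<union> (\<Union>i<n. D i))"
    by (rule finite_measure_mono[OF sub2]) (use Ae Be De in auto)
  also have "\<dots> \<le> prob ((\<Union>i. A i) - B n) + prob (\<Union>i<n. D i)"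
    by (rule measure_Un_le) (use Ae Be De in auto)
  also have "prob ((\<Union>i. A i) - B n) = prob (\<Union>i. A i) - prob (B n)"
    by (rule finite_measure_Diff) (use Ae Be in \<open>auto simp: B_def\<close>)
  also have "prob (\<Union>i<n. D i) \<le> (\<Sum>i<n. prob (D i))"
    by (rule measure_UNION_le) (use De in auto)
  also have "\<dots> \<le> (\<Sum>i<n. \<epsilon> / (2 * real n))"
    by (rule sum_mono) (use Gf(2) in \<open>auto simp: D_def less_imp_le\<close>)
  also have "\<dots> = \<epsilon> / 2" using n0 by simp
  finally have "prob (((\<Union>i. A i) - G) \<union> (G - (\<Union>i. A i))) < \<epsilon>" using close by linarith
  then show ?case using G by blast
qed

end


locale setting =
  fixes \<mu> :: "(nat \<Rightarrow> real) measure"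
  assumes prob: "prob_space \<mu>" and sets_eq: "sets \<mu> = sets path_space"
    and stat: "stationary \<mu>"
begin

sublocale prob_space \<mu> by (rule prob)

lemma space_eq: "space \<mu> = (\<Pi>\<^sub>E i\<in>UNIV. {0..1::real})"
proof -
  have "space \<mu> = space path_space" using sets_eq by (rule sets_eq_imp_space_eq)
  then show ?thesis by (simp add: path_space_def space_PiM space_restrict_space)
qed

lemma inS: "x \<in> space \<mu> \<Longrightarrow> 0 \<le> x i \<and> x i \<le> 1"
  using space_eq by auto

lemma meas_coord: "(\<lambda>x. x i) \<in> borel_measurable \<mu>"
proof -
  have "(\<lambda>x. x i) \<in> measurable path_space (restrict_space borel {0..1::real})"
    unfolding path_space_def by (rule measurable_component_singleton) simp
  moreover have "(\<lambda>y::real. y) \<in> measurable (restrict_space borel {0..1}) borel"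
    by (rule measurable_restrict_space1) simp
  ultimately have "(\<lambda>x. x i) \<in> measurable path_space borel"
    using measurable_comp[of "\<lambda>x. x i" path_space _ "\<lambda>y. y"] by (simp add: comp_def)
  moreover have "measurable \<mu> (borel :: real measure) = measurable path_space borel"
    by (rule measurable_cong_sets[OF sets_eq refl])
  ultimately show ?thesis by simp
qed

lemma gens_sub: "{(\<lambda>x. x i) -` B \<inter> space \<mu> | i B. i \<in> I \<and> B \<in> sets borel} \<subseteq> Pow (space \<mu>)"
  by auto

lemma csig_alg: "sigma_algebra (space \<mu>) (coord_sigma \<mu> I)"
  unfolding coord_sigma_def by (rule sigma_algebra_sigma_sets) auto

lemma coord_sigma_sets: "coord_sigma \<mu> I \<subseteq> sets \<mu>"
  unfolding coord_sigma_def
  by (rule sets.sigma_sets_subset) (auto intro: measurable_sets[OF meas_coord])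

lemma coord_sigma_mono: "I \<subseteq> J \<Longrightarrow> coord_sigma \<mu> I \<subseteq> coord_sigma \<mu> J"
  unfolding coord_sigma_def by (rule sigma_sets_mono') blast

lemma gen_in: "i \<in> I \<Longrightarrow> B \<in> sets borel \<Longrightarrow> {x \<in> space \<mu>. x i \<in> B} \<in> coord_sigma \<mu> I"
proof -
  assume "i \<in> I" "B \<in> sets borel"
  then have "(\<lambda>x. x i) -` B \<inter> space \<mu> \<in> coord_sigma \<mu> I"
    unfolding coord_sigma_def by (intro sigma_sets.Basic) blast
  moreover have "(\<lambda>x. x i) -` B \<inter> space \<mu> = {x \<in> space \<mu>. x i \<in> B}" by auto
  ultimately show ?thesis by simp
qed

lemma cyl_in:
  assumes "finite F" "\<And>r. r \<in> F \<Longrightarrow> g r \<in> I" "\<And>r. r \<in> F \<Longrightarrow> D r \<in> sets borel"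
  shows "{x \<in> space \<mu>. \<forall>r\<in>F. x (g r) \<in> D r} \<in> coord_sigma \<mu> I"
  using assms
proof (induction F rule: finite_induct)
  case empty
  interpret A: sigma_algebra "space \<mu>" "coord_sigma \<mu> I" by (rule csig_alg)
  show ?case using A.top by simp
next
  case (insert a F)
  have e: "{x \<in> space \<mu>. \<forall>r\<in>insert a F. x (g r) \<in> D r} =
      {x \<in> space \<mu>. x (g a) \<in> D a} \<inter> {x \<in> space \<mu>. \<forall>r\<in>F. x (g r) \<in> D r}" by auto
  interpret A: sigma_algebra "space \<mu>" "coord_sigma \<mu> I" by (rule csig_alg)
  show ?case unfolding e
    by (rule A.Int) (use insert gen_in in auto)
qed

lemma dyadic_int_borel: "dyadic_int l i \<in> sets borel"
  by (simp add: dyadic_int_def)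

lemma Ev_in:
  assumes B: "B \<in> Dcal K l" and I: "{s..<s+K} \<subseteq> I"
  shows "{x \<in> space \<mu>. block x s K \<in> B} \<in> coord_sigma \<mu> I"
proof -
  obtain Sc where Sc: "B = \<Union>Sc" "Sc \<subseteq> Delta K l" using B by (auto simp: Dcal_def)
  have fin: "finite Sc" using Sc(2) finite_cube_indices
    by (metis Delta_def finite_imageI finite_subset)
  have e: "{x \<in> space \<mu>. block x s K \<in> B} = (\<Union>C\<in>Sc. {x \<in> space \<mu>. block x s K \<in> C})"
    using Sc by auto
  have CI: "{x \<in> space \<mu>. block x s K \<in> C} \<in> coord_sigma \<mu> I" if C: "C \<in> Sc" for C
  proof -
    obtain c where c: "C = dyadic_cube K l c" using C Sc by (auto simp: Delta_def)
    have "{x \<in> space \<mu>. block x s K \<in> C} = {x \<in> space \<mu>. \<forall>r\<in>{..<K}. x (s + r) \<in> dyadic_int l (c!r)}"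
      by (auto simp: c dyadic_cube_def block_def)
    also have "\<dots> \<in> coord_sigma \<mu> I"
      by (rule cyl_in) (use I dyadic_int_borel in auto)
    finally show ?thesis .
  qed
  interpret A: sigma_algebra "space \<mu>" "coord_sigma \<mu> I" by (rule csig_alg)
  show ?thesis unfolding e
    by (intro A.finite_UN fin) (use CI in auto)
qed

lemma Ev_sets: "B \<in> Dcal K l \<Longrightarrow> {x \<in> space \<mu>. block x s K \<in> B} \<in> sets \<mu>"
  using Ev_in[of B K l s "{s..<s+K}"] coord_sigma_sets by blast

definition T :: "nat \<Rightarrow> (nat \<Rightarrow> real) \<Rightarrow> (nat \<Rightarrow> real)" where
  "T k x = (\<lambda>i. x (i + k))"

lemma T_meas: "T k \<in> measurable \<mu> \<mu>"
proof -
  have "(\<lambda>x i. x (i + k)) \<in> measurable path_space path_space"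
    unfolding path_space_def
    by (rule measurable_PiM_single') (auto intro: measurable_component_singleton simp: space_PiM)
  then show ?thesis unfolding T_def
    using measurable_cong_sets[OF sets_eq sets_eq] by simp
qed

lemma distr_T: "distr \<mu> \<mu> (T k) = \<mu>"
proof (induction k)
  case 0
  have "T 0 = (\<lambda>x. x)" by (simp add: T_def fun_eq_iff)
  then show ?case by simp
next
  case (Suc k)
  have e: "T (Suc k) = T 1 \<circ> T k" by (simp add: T_def fun_eq_iff comp_def add.commute)
  have "distr \<mu> \<mu> (T 1) = \<mu>" using stat unfolding stationary_def T_def by simp
  then show ?case unfolding e using Suc
    by (metis T_meas distr_distr)
qed

lemma measure_T:
  assumes "{x \<in> space \<mu>. P x} \<in> sets \<mu>"
  shows "prob {x \<in> space \<mu>. P (T k x)} = prob {x \<in> space \<mu>. P x}"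
proof -
  have "prob {x \<in> space \<mu>. P x} = measure (distr \<mu> \<mu> (T k)) {x \<in> space \<mu>. P x}"
    by (simp add: distr_T)
  also have "\<dots> = prob (T k -` {x \<in> space \<mu>. P x} \<inter> space \<mu>)"
    by (rule measure_distr[OF T_meas assms])
  also have "T k -` {x \<in> space \<mu>. P x} \<inter> space \<mu> = {x \<in> space \<mu>. P (T k x)}"
    using measurable_space[OF T_meas] by auto
  finally show ?thesis by simp
qed

lemma block_T: "block (T k x) s K = block x (s + k) K"
  by (simp add: block_def T_def ac_simps)

lemma cov_bound1: "\<bar>prob (U \<inter> V) - prob U * prob V\<bar> \<le> 1"
proof -
  have "0 \<le> prob (U \<inter> V)" "prob (U \<inter> V) \<le> 1" "0 \<le> prob U * prob V" "prob U * prob V \<le> 1"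
    by (simp_all add: mult_le_one)
  then show ?thesis by linarith
qed

lemma alpha_sets_le1: "alpha_sets \<mu> (coord_sigma \<mu> I) (coord_sigma \<mu> J) \<le> 1"
  unfolding alpha_sets_def
proof (rule cSUP_least)
  interpret A: sigma_algebra "space \<mu>" "coord_sigma \<mu> I" by (rule csig_alg)
  interpret B: sigma_algebra "space \<mu>" "coord_sigma \<mu> J" by (rule csig_alg)
  show "coord_sigma \<mu> I \<times> coord_sigma \<mu> J \<noteq> {}"
    using A.empty_sets B.empty_sets by blast
qed (use cov_bound1 in auto)

lemma cov_le_alpha_sets:
  assumes "U \<in> coord_sigma \<mu> I" "V \<in> coord_sigma \<mu> J"
  shows "\<bar>prob (U \<inter> V) - prob U * prob V\<bar> \<le> alpha_sets \<mu> (coord_sigma \<mu> I) (coord_sigma \<mu> J)"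
  unfolding alpha_sets_def
proof -
  have "bdd_above ((\<lambda>UV. \<bar>prob (fst UV \<inter> snd UV) - prob (fst UV) * prob (snd UV)\<bar>) ` (coord_sigma \<mu> I \<times> coord_sigma \<mu> J))"
    using cov_bound1 by (intro bdd_aboveI[of _ 1]) auto
  from cSUP_upper[OF _ this, of "(U, V)"] assms
  show "\<bar>prob (U \<inter> V) - prob U * prob V\<bar> \<le> (SUP UV\<in>coord_sigma \<mu> I \<times> coord_sigma \<mu> J. \<bar>prob (fst UV \<inter> snd UV) - prob (fst UV) * prob (snd UV)\<bar>)"
    by simp
qed

lemma bdd_alpha: "bdd_above (range (\<lambda>k. alpha_sets \<mu> (coord_sigma \<mu> {..k}) (coord_sigma \<mu> {k+m..})))"
  using alpha_sets_le1 by (intro bdd_aboveI[of _ 1]) auto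

lemma alpha_sets_le_mix: "alpha_sets \<mu> (coord_sigma \<mu> {..k}) (coord_sigma \<mu> {k+m..}) \<le> alpha_mix \<mu> m"
  unfolding alpha_mix_def by (rule cSUP_upper[OF _ bdd_alpha]) simp

lemma cov_le_alpha:
  assumes "U \<in> coord_sigma \<mu> {..k}" "V \<in> coord_sigma \<mu> {k+m..}"
  shows "\<bar>prob (U \<inter> V) - prob U * prob V\<bar> \<le> alpha_mix \<mu> m"
  using cov_le_alpha_sets[OF assms] alpha_sets_le_mix by (rule order_trans)

lemma alpha_nonneg: "0 \<le> alpha_mix \<mu> m"
proof -
  interpret A: sigma_algebra "space \<mu>" "coord_sigma \<mu> {..0}" by (rule csig_alg)
  interpret B: sigma_algebra "space \<mu>" "coord_sigma \<mu> {0+m..}" by (rule csig_alg)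
  have "{} \<in> coord_sigma \<mu> {..0}" by (rule A.empty_sets)
  moreover have "{} \<in> coord_sigma \<mu> {0+m..}" by (rule B.empty_sets)
  ultimately have "\<bar>prob ({} \<inter> {}) - prob {} * prob {}\<bar> \<le> alpha_mix \<mu> m" by (rule cov_le_alpha)
  then show ?thesis by simp
qed

lemma alpha_le1: "alpha_mix \<mu> m \<le> 1"
  unfolding alpha_mix_def by (rule cSUP_least) (auto intro: alpha_sets_le1)

lemma cov_blocks:
  assumes N: "1 \<le> N" and ik: "i < k"
    and Ei: "Ei \<in> coord_sigma \<mu> {i*N..<i*N+N}" and Ek: "Ek \<in> coord_sigma \<mu> {k*N..<k*N+N}"
  shows "\<bar>prob (Ei \<inter> Ek) - prob Ei * prob Ek\<bar> \<le> alpha_mix \<mu> (k - i)"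
proof -
  define d where "d = k - i"
  have d1: "1 \<le> d" and kd: "k = i + d" using ik by (auto simp: d_def)
  define p where "p = k*N - d"
  have "N - 1 \<le> d * (N - 1)" using d1 by simp
  also have "d * (N - 1) = d * N - d" by (simp add: diff_mult_distrib2)
  finally have h: "N - 1 \<le> d * N - d" .
  have dN: "d \<le> d * N" using N by simp
  have kN: "k*N = i*N + d*N" by (simp add: kd algebra_simps)
  have "i*N + N - 1 \<le> p" unfolding p_def kN using h N dN by linarith
  then have "{i*N..<i*N+N} \<subseteq> {..p}" by auto
  then have U: "Ei \<in> coord_sigma \<mu> {..p}" using Ei coord_sigma_mono by blast
  have "d \<le> k*N" using dN kN by linarith
  then have "p + d = k*N" unfolding p_def by simp
  then have "{k*N..<k*N+N} \<subseteq> {p + d..}" by auto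
  then have V: "Ek \<in> coord_sigma \<mu> {p + d..}" using Ek coord_sigma_mono by blast
  show ?thesis using cov_le_alpha[OF U V] by (simp add: d_def)
qed

end


lemma idx_bounds:
  assumes y: "0 \<le> y" "y \<le> 1"
  shows "y * 2^l - 1 \<le> real (idx l y) \<and> real (idx l y) \<le> y * 2^l"
proof -
  define F where "F = \<lfloor>y * 2^l\<rfloor>"
  have F0: "0 \<le> F" unfolding F_def using y by simp
  have F1: "real_of_int F \<le> y * 2^l" "y * 2^l < real_of_int F + 1" unfolding F_def by linarith+
  have yl: "y * 2^l \<le> 2^l" using y by simp
  have NI: "(2::int)^l - 1 \<ge> 0" by simp
  have e: "real (idx l y) = real_of_int (min F (2^l - 1))"
    unfolding idx_def F_def[symmetric] using F0 NI by simp
  show ?thesis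
  proof (cases "F \<le> 2^l - 1")
    case True
    then show ?thesis using e F1 by (simp add: min_def)
  next
    case False
    then have "real (idx l y) = 2^l - 1" using e by (simp add: min_def)
    moreover have "real_of_int F \<ge> 2^l"
    proof -
      have "F \<ge> 2^l" using False by linarith
      then have "real_of_int F \<ge> real_of_int (2^l)" by (simp only: of_int_le_iff)
      then show ?thesis by simp
    qed
    ultimately show ?thesis using F1 yl by linarith
  qed
qed

lemma le_iff_idx:
  assumes y: "0 \<le> y" "y \<le> 1"
  shows "y \<le> a \<longleftrightarrow> (\<forall>l. real (idx l y) / 2^l \<le> a)"
proof
  assume "y \<le> a"
  show "\<forall>l. real (idx l y) / 2^l \<le> a"
  proof
    fix l
    have "real (idx l y) \<le> y * 2^l" using idx_bounds[OF y] by blast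
    also have "y * 2^l \<le> a * 2^l" by (rule mult_right_mono) (use \<open>y \<le> a\<close> in simp_all)
    finally show "real (idx l y) / 2^l \<le> a" by (simp add: divide_le_eq)
  qed
next
  assume H: "\<forall>l. real (idx l y) / 2^l \<le> a"
  show "y \<le> a"
  proof (rule ccontr)
    assume "\<not> y \<le> a"
    then have "0 < y - a" by simp
    from real_arch_pow_inv[OF this, of "1/2"] obtain l where l: "(1/2)^l < y - a" by auto
    have "y * 2^l - 1 \<le> real (idx l y)" using idx_bounds[OF y] by blast
    then have "(y * 2^l - 1) / 2^l \<le> real (idx l y) / 2^l"
      by (intro divide_right_mono) simp_all
    moreover have "(y * 2^l - 1) / 2^l = y - (1/2)^l"
      by (simp add: diff_divide_distrib power_one_over)
    ultimately have "y - (1/2)^l \<le> real (idx l y) / 2^l" by simp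
    then show False using H[rule_format, of l] l by linarith
  qed
qed

context setting
begin

definition Ev :: "nat \<Rightarrow> nat \<Rightarrow> real list set \<Rightarrow> (nat \<Rightarrow> real) set" where
  "Ev s K B = {x \<in> space \<mu>. block x s K \<in> B}"

definition fam :: "nat \<Rightarrow> nat set \<Rightarrow> (nat \<Rightarrow> real) set set" where
  "fam s Ls = {{x \<in> space \<mu>. map (idx l) (block x s L) \<in> Q} | l L Q. L \<in> Ls}"

lemma block_ubox: "x \<in> space \<mu> \<Longrightarrow> block x s L \<in> ubox L"
  using inS by (auto simp: block_def ubox_def)

lemma Ev_ubox: "x \<in> space \<mu> \<Longrightarrow> x \<in> Ev s L {v \<in> ubox L. P v} \<longleftrightarrow> P (block x s L)"
  using block_ubox by (auto simp: Ev_def)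

lemma lift_eq:
  assumes x: "x \<in> space \<mu>" and ll: "l \<le> l'" and LL: "L \<le> L'"
  shows "map (\<lambda>a. a div 2^(l'-l)) (take L (map (idx l') (block x s L'))) = map (idx l) (block x s L)"
proof -
  have t: "take L (block x s L') = block x s L" using LL by (simp add: block_def take_map)
  have "take L (map (idx l') (block x s L')) = map (idx l') (block x s L)"
    by (simp add: take_map t)
  then have "map (\<lambda>a. a div 2^(l'-l)) (take L (map (idx l') (block x s L'))) =
      map (\<lambda>y. idx l' y div 2^(l'-l)) (block x s L)"
    by simp
  also have "\<dots> = map (idx l) (block x s L)"
    using inS[OF x] idx_refine[OF _ _ ll] by (auto simp: block_def)
  finally show ?thesis .
qed

lemma fam_lift:
  assumes "l \<le> l'" "L \<le> L'"
  shows "{x \<in> space \<mu>. map (idx l) (block x s L) \<in> Q} =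
    {x \<in> space \<mu>. map (idx l') (block x s L') \<in> {c. map (\<lambda>a. a div 2^(l'-l)) (take L c) \<in> Q}}"
  using lift_eq[OF _ assms] by auto

lemma fam_events: "fam s Ls \<subseteq> events"
proof
  fix G assume "G \<in> fam s Ls"
  then obtain l L Q where G: "G = {x \<in> space \<mu>. map (idx l) (block x s L) \<in> Q}" by (auto simp: fam_def)
  have "G = Ev s L {v \<in> ubox L. map (idx l) v \<in> Q}" using Ev_ubox G by (auto simp: Ev_def)
  then show "G \<in> events" unfolding Ev_def using Ev_sets[OF Dcal_intro] by simp
qed

lemma fam_compl: "G \<in> fam s Ls \<Longrightarrow> space \<mu> - G \<in> fam s Ls"
proof -
  assume "G \<in> fam s Ls"
  then obtain l L Q where G: "G = {x \<in> space \<mu>. map (idx l) (block x s L) \<in> Q}" "L \<in> Ls"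
    by (auto simp: fam_def)
  then have "space \<mu> - G = {x \<in> space \<mu>. map (idx l) (block x s L) \<in> - Q}" by auto
  then show ?thesis using G(2) unfolding fam_def by blast
qed

lemma fam_un:
  assumes mx: "\<And>a b. a \<in> Ls \<Longrightarrow> b \<in> Ls \<Longrightarrow> max a b \<in> Ls"
  shows "G1 \<in> fam s Ls \<Longrightarrow> G2 \<in> fam s Ls \<Longrightarrow> G1 \<union> G2 \<in> fam s Ls"
proof -
  assume "G1 \<in> fam s Ls" "G2 \<in> fam s Ls"
  then obtain l1 L1 Q1 l2 L2 Q2 where
    G1: "G1 = {x \<in> space \<mu>. map (idx l1) (block x s L1) \<in> Q1}" "L1 \<in> Ls" and
    G2: "G2 = {x \<in> space \<mu>. map (idx l2) (block x s L2) \<in> Q2}" "L2 \<in> Ls"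
    by (auto simp: fam_def)
  define l where "l = max l1 l2"
  define L where "L = max L1 L2"
  have "G1 \<union> G2 = {x \<in> space \<mu>. map (idx l) (block x s L) \<in>
      {c. map (\<lambda>a. a div 2^(l-l1)) (take L1 c) \<in> Q1} \<union> {c. map (\<lambda>a. a div 2^(l-l2)) (take L2 c) \<in> Q2}}"
  proof -
    have "l1 \<le> l" "l2 \<le> l" "L1 \<le> L" "L2 \<le> L" by (simp_all add: l_def L_def)
    then show ?thesis unfolding G1(1) G2(1)
      using lift_eq[OF _ \<open>l1 \<le> l\<close> \<open>L1 \<le> L\<close>, of _ s] lift_eq[OF _ \<open>l2 \<le> l\<close> \<open>L2 \<le> L\<close>, of _ s]
      by auto
  qed
  moreover have "L \<in> Ls" unfolding L_def using mx G1 G2 by blast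
  ultimately show ?thesis unfolding fam_def by blast
qed

lemma fam_gen:
  assumes i: "s \<le> i" and L: "L \<in> Ls" "i < s + L" and B: "B \<in> sets borel"
  shows "{x \<in> space \<mu>. x i \<in> B} \<in> sigma_sets (space \<mu>) (fam s Ls)"
proof -
  define M' where "M' = sigma (space \<mu>) (fam s Ls)"
  have famP: "fam s Ls \<subseteq> Pow (space \<mu>)" by (auto simp: fam_def)
  have sM: "sets M' = sigma_sets (space \<mu>) (fam s Ls)" unfolding M'_def using famP by (rule sets_measure_of)
  have spM: "space M' = space \<mu>" unfolding M'_def using famP by (rule space_measure_of)
  have "(\<lambda>x. x i) \<in> borel_measurable M'"
  proof (subst borel_measurable_iff_le, intro allI)
    fix a
    have nth: "map (idx l) (block x s L) ! (i - s) = idx l (x i)" for x l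
      using i L by (simp add: block_def)
    have "{w \<in> space M'. w i \<le> a} = (\<Inter>l\<in>UNIV. {x \<in> space \<mu>. map (idx l) (block x s L) \<in> {c. real (c ! (i - s)) / 2^l \<le> a}})"
    proof (intro set_eqI iffI)
      fix x assume "x \<in> {w \<in> space M'. w i \<le> a}"
      then have x: "x \<in> space \<mu>" "x i \<le> a" unfolding spM by auto
      then have "\<forall>l. real (idx l (x i)) / 2^l \<le> a" using le_iff_idx[of "x i" a] inS[OF x(1), of i] by blast
      then show "x \<in> (\<Inter>l\<in>UNIV. {x \<in> space \<mu>. map (idx l) (block x s L) \<in> {c. real (c ! (i - s)) / 2^l \<le> a}})"
        using x(1) by (simp add: nth)
    next
      fix x assume x: "x \<in> (\<Inter>l\<in>UNIV. {x \<in> space \<mu>. map (idx l) (block x s L) \<in> {c. real (c ! (i - s)) / 2^l \<le> a}})"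
      then have x1: "x \<in> space \<mu>" by blast
      from x have "\<forall>l. real (idx l (x i)) / 2^l \<le> a" by (simp add: nth)
      then have "x i \<le> a" using le_iff_idx[of "x i" a] inS[OF x1, of i] by blast
      then show "x \<in> {w \<in> space M'. w i \<le> a}" using x1 unfolding spM by simp
    qed
    also have "\<dots> \<in> sets M'"
    proof (rule sets.countable_INT)
      define F where "F l = {x \<in> space \<mu>. map (idx l) (block x s L) \<in> {c. real (c ! (i - s)) / 2^l \<le> a}}" for l
      have famF: "F l \<in> fam s Ls" for l unfolding F_def fam_def using L(1) by blast
      show "range F \<subseteq> sets M'"
      proof (rule subsetI)
        fix X assume "X \<in> range F"
        then obtain l where "X = F l" by auto
        then show "X \<in> sets M'" unfolding sM using famF[of l] by (metis sigma_sets.Basic)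
      qed
    qed simp
    finally show "{w \<in> space M'. w i \<le> a} \<in> sets M'" .
  qed
  from measurable_sets[OF this B] have "(\<lambda>x. x i) -` B \<inter> space M' \<in> sets M'" .
  moreover have "(\<lambda>x. x i) -` B \<inter> space M' = {x \<in> space \<mu>. x i \<in> B}" unfolding spM by auto
  ultimately show ?thesis using sM by simp
qed

lemma coord_sigma_fam:
  assumes "\<And>i. i \<in> I \<Longrightarrow> s \<le> i \<and> (\<exists>L\<in>Ls. i < s + L)"
  shows "coord_sigma \<mu> I \<subseteq> sigma_sets (space \<mu>) (fam s Ls)"
  unfolding coord_sigma_def
proof (rule sigma_sets_mono, safe)
  fix i :: nat and B :: "real set" assume "i \<in> I" "B \<in> sets borel"
  then obtain L where "s \<le> i" "L \<in> Ls" "i < s + L" using assms by blast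
  have "{x \<in> space \<mu>. x i \<in> B} \<in> sigma_sets (space \<mu>) (fam s Ls)"
    by (rule fam_gen) fact+
  moreover have "(\<lambda>x. x i) -` B \<inter> space \<mu> = {x \<in> space \<mu>. x i \<in> B}" by auto
  ultimately show "(\<lambda>x. x i) -` B \<inter> space \<mu> \<in> sigma_sets (space \<mu>) (fam s Ls)" by simp
qed

lemma approx_fam:
  assumes mx: "\<And>a b. a \<in> Ls \<Longrightarrow> b \<in> Ls \<Longrightarrow> max a b \<in> Ls" and ne: "L0 \<in> Ls"
    and I: "\<And>i. i \<in> I \<Longrightarrow> s \<le> i \<and> (\<exists>L\<in>Ls. i < s + L)"
    and U: "U \<in> coord_sigma \<mu> I" and e: "0 < \<epsilon>"
  shows "\<exists>G\<in>fam s Ls. prob ((U - G) \<union> (G - U)) < \<epsilon>"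
proof -
  have a0: "{x \<in> space \<mu>. map (idx 0) (block x s L0) \<in> {}} \<in> fam s Ls" using ne unfolding fam_def by blast
  show ?thesis
    by (rule approx_sigma[OF fam_events a0 fam_compl fam_un[OF mx]])
       (use U coord_sigma_fam[OF I] e in auto)
qed

end


context setting
begin

definition idxset :: "nat \<Rightarrow> nat \<Rightarrow> nat \<Rightarrow> (nat \<times> real list set \<times> real list set) set" where
  "idxset n l m = {(j, A, B). j \<in> {1..n-m} \<and> A \<in> Dcal j l \<and> B \<in> Dcal (n - m - j + 1) l}"

definition gpop :: "nat \<Rightarrow> nat \<Rightarrow> nat \<Rightarrow> real list set \<Rightarrow> real list set \<Rightarrow> real" where
  "gpop n m j A B = \<bar>prob (Ev 0 j A \<inter> Ev (j+m-1) (n-m-j+1) B) - prob (Ev 0 j A) * prob (Ev 0 (n-m-j+1) B)\<bar>"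

definition astar :: "nat \<Rightarrow> nat \<Rightarrow> nat \<Rightarrow> real" where
  "astar n l m = Max ((\<lambda>(j, A, B). gpop n m j A B) ` idxset n l m)"

lemma finite_idxset: "finite (idxset n l m)"
proof (rule finite_subset)
  show "idxset n l m \<subseteq> Sigma {1..n-m} (\<lambda>j. Dcal j l \<times> Dcal (n - m - j + 1) l)"
    by (auto simp: idxset_def)
  show "finite (Sigma {1..n-m} (\<lambda>j. Dcal j l \<times> Dcal (n - m - j + 1) l))"
    by (intro finite_SigmaI finite_cartesian_product finite_Dcal) simp
qed

lemma empty_Dcal: "{} \<in> Dcal K l"
  unfolding Dcal_def by (rule CollectI, rule exI[of _ "{}"]) simp

lemma idxset_ne: "m < n \<Longrightarrow> (1, {}, {}) \<in> idxset n l m"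
  by (auto simp: idxset_def empty_Dcal)

lemma Ev_shift: "B \<in> Dcal K l \<Longrightarrow> prob (Ev s K B) = prob (Ev 0 K B)"
proof -
  assume B: "B \<in> Dcal K l"
  have "prob (Ev s K B) = prob {x \<in> space \<mu>. block (T s x) 0 K \<in> B}"
    by (simp add: Ev_def block_T)
  also have "\<dots> = prob {x \<in> space \<mu>. block x 0 K \<in> B}"
    by (rule measure_T) (rule Ev_sets[OF B])
  finally show ?thesis by (simp add: Ev_def)
qed

lemma gpop_le:
  assumes m: "1 \<le> m" and jAB: "(j, A, B) \<in> idxset n l m"
  shows "gpop n m j A B \<le> alpha_mix \<mu> m"
proof -
  have j: "1 \<le> j" "j \<le> n - m" and A: "A \<in> Dcal j l" and B: "B \<in> Dcal (n - m - j + 1) l"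
    using jAB by (auto simp: idxset_def)
  have U: "Ev 0 j A \<in> coord_sigma \<mu> {..j-1}" unfolding Ev_def
    by (rule Ev_in[OF A]) (use j in auto)
  have V: "Ev (j+m-1) (n-m-j+1) B \<in> coord_sigma \<mu> {(j-1)+m..}" unfolding Ev_def
    by (rule Ev_in[OF B]) (use j m in auto)
  have "prob (Ev 0 (n-m-j+1) B) = prob (Ev (j+m-1) (n-m-j+1) B)" by (rule Ev_shift[OF B, symmetric])
  then show ?thesis unfolding gpop_def using cov_le_alpha[OF U V] by simp
qed

lemma astar_le: "1 \<le> m \<Longrightarrow> m < n \<Longrightarrow> astar n l m \<le> alpha_mix \<mu> m"
proof -
  assume m: "1 \<le> m" "m < n"
  have ne: "idxset n l m \<noteq> {}" using idxset_ne[OF m(2)] by blast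
  show ?thesis unfolding astar_def using finite_idxset ne gpop_le[OF m(1)]
    by (subst Max_le_iff) auto
qed

lemma gpop_nonneg: "0 \<le> gpop n m j A B"
  unfolding gpop_def by (rule abs_ge_zero)

lemma astar_ge: "(j, A, B) \<in> idxset n l m \<Longrightarrow> gpop n m j A B \<le> astar n l m"
  unfolding astar_def using finite_idxset
  by (intro Max_ge) (auto intro: image_eqI[of _ _ "(j, A, B)"])

lemma astar_nonneg: "m < n \<Longrightarrow> 0 \<le> astar n l m"
  using astar_ge[OF idxset_ne] gpop_nonneg by (rule order_trans[rotated])

lemma prob_diff_le:
  assumes "A \<in> events" "B \<in> events"
  shows "\<bar>prob A - prob B\<bar> \<le> prob ((A - B) \<union> (B - A))"
proof -
  have "prob A \<le> prob (B \<union> (A - B))" by (rule finite_measure_mono) (use assms in auto)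
  also have "\<dots> \<le> prob B + prob (A - B)" by (rule measure_Un_le) (use assms in auto)
  also have "prob (A - B) \<le> prob ((A - B) \<union> (B - A))" by (rule finite_measure_mono) (use assms in auto)
  finally have 1: "prob A \<le> prob B + prob ((A - B) \<union> (B - A))" by simp
  have "prob B \<le> prob (A \<union> (B - A))" by (rule finite_measure_mono) (use assms in auto)
  also have "\<dots> \<le> prob A + prob (B - A)" by (rule measure_Un_le) (use assms in auto)
  also have "prob (B - A) \<le> prob ((A - B) \<union> (B - A))" by (rule finite_measure_mono) (use assms in auto)
  finally have 2: "prob B \<le> prob A + prob ((A - B) \<union> (B - A))" by simp
  show ?thesis using 1 2 by linarith
qed

lemma cov_perturb:
  assumes e: "U \<in> events" "V \<in> events" "G \<in> events" "H \<in> events"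
  shows "\<bar>(prob (U \<inter> V) - prob U * prob V) - (prob (G \<inter> H) - prob G * prob H)\<bar>
    \<le> 2 * prob ((U - G) \<union> (G - U)) + 2 * prob ((V - H) \<union> (H - V))"
proof -
  define dU where "dU = prob ((U - G) \<union> (G - U))"
  define dV where "dV = prob ((V - H) \<union> (H - V))"
  have "\<bar>prob (U \<inter> V) - prob (G \<inter> H)\<bar> \<le> prob ((U \<inter> V - G \<inter> H) \<union> (G \<inter> H - U \<inter> V))"
    by (rule prob_diff_le) (use e in auto)
  also have "\<dots> \<le> prob (((U - G) \<union> (G - U)) \<union> ((V - H) \<union> (H - V)))"
    by (rule finite_measure_mono) (use e in auto)
  also have "\<dots> \<le> dU + dV" unfolding dU_def dV_def by (rule measure_Un_le) (use e in auto)
  finally have 1: "\<bar>prob (U \<inter> V) - prob (G \<inter> H)\<bar> \<le> dU + dV" .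
  have dpU: "\<bar>prob U - prob G\<bar> \<le> dU" unfolding dU_def by (rule prob_diff_le) (use e in auto)
  have dpV: "\<bar>prob V - prob H\<bar> \<le> dV" unfolding dV_def by (rule prob_diff_le) (use e in auto)
  have "prob U * prob V - prob G * prob H = (prob U - prob G) * prob V + prob G * (prob V - prob H)"
    by (simp add: algebra_simps)
  then have "\<bar>prob U * prob V - prob G * prob H\<bar> \<le> \<bar>prob U - prob G\<bar> * prob V + prob G * \<bar>prob V - prob H\<bar>"
    by (simp add: abs_mult) (metis abs_mult abs_of_nonneg abs_triangle_ineq measure_nonneg)
  also have "\<dots> \<le> dU * 1 + 1 * dV"
    by (intro add_mono mult_mono dpU dpV) (auto simp: dU_def dV_def)
  finally have 2: "\<bar>prob U * prob V - prob G * prob H\<bar> \<le> dU + dV" by simp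
  show ?thesis using 1 2 unfolding dU_def[symmetric] dV_def[symmetric] by linarith
qed

lemma Ev_lift:
  assumes "l \<le> l'" "L \<le> L'"
  shows "Ev s L' {v \<in> ubox L'. map (idx l') v \<in> {c. map (\<lambda>a. a div 2^(l'-l)) (take L c) \<in> Q}}
    = {x \<in> space \<mu>. map (idx l) (block x s L) \<in> Q}"
  using lift_eq[OF _ assms, of _ s] block_ubox unfolding Ev_def by auto

lemma astar_lower:
  assumes m: "1 \<le> m" and e: "0 < \<epsilon>" and lt: "filterlim l at_top sequentially"
    and nt: "filterlim n at_top sequentially"
  shows "eventually (\<lambda>t. alpha_mix \<mu> m - \<epsilon> < astar (n t) (l t) m) sequentially"
proof -
  have "alpha_mix \<mu> m - \<epsilon>/2 < (SUP k. alpha_sets \<mu> (coord_sigma \<mu> {..k}) (coord_sigma \<mu> {k+m..}))"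
    using e by (simp add: alpha_mix_def)
  then obtain k where k: "alpha_mix \<mu> m - \<epsilon>/2 < alpha_sets \<mu> (coord_sigma \<mu> {..k}) (coord_sigma \<mu> {k+m..})"
    by (subst (asm) less_cSUP_iff[OF UNIV_not_empty bdd_alpha]) auto
  define \<U> where "\<U> = coord_sigma \<mu> {..k}"
  define \<V> where "\<V> = coord_sigma \<mu> {k+m..}"
  interpret A: sigma_algebra "space \<mu>" \<U> unfolding \<U>_def by (rule csig_alg)
  interpret B: sigma_algebra "space \<mu>" \<V> unfolding \<V>_def by (rule csig_alg)
  have ne: "\<U> \<times> \<V> \<noteq> {}" using A.empty_sets B.empty_sets by blast
  have bdd: "bdd_above ((\<lambda>UV. \<bar>prob (fst UV \<inter> snd UV) - prob (fst UV) * prob (snd UV)\<bar>) ` (\<U> \<times> \<V>))"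
    using cov_bound1 by (intro bdd_aboveI[of _ 1]) auto
  have "alpha_mix \<mu> m - \<epsilon>/2 < (SUP UV \<in> \<U> \<times> \<V>. \<bar>prob (fst UV \<inter> snd UV) - prob (fst UV) * prob (snd UV)\<bar>)"
    using k unfolding alpha_sets_def \<U>_def \<V>_def .
  then obtain UV where UV: "UV \<in> \<U> \<times> \<V>" "alpha_mix \<mu> m - \<epsilon>/2 < \<bar>prob (fst UV \<inter> snd UV) - prob (fst UV) * prob (snd UV)\<bar>"
    by (subst (asm) less_cSUP_iff[OF ne bdd]) auto
  define U where "U = fst UV"
  define V where "V = snd UV"
  have U: "U \<in> coord_sigma \<mu> {..k}" and V: "V \<in> coord_sigma \<mu> {k+m..}"
    using UV(1) by (auto simp: U_def V_def \<U>_def \<V>_def)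
  have cUV: "alpha_mix \<mu> m - \<epsilon>/2 < \<bar>prob (U \<inter> V) - prob U * prob V\<bar>" using UV(2) by (simp add: U_def V_def)
  have e8: "0 < \<epsilon>/8" using e by simp
  obtain GU where GU: "GU \<in> fam 0 {k+1}" "prob ((U - GU) \<union> (GU - U)) < \<epsilon>/8"
    using approx_fam[of "{k+1}" "k+1" "{..k}" 0 U "\<epsilon>/8"] U e8 by auto
  obtain GV where GV: "GV \<in> fam (k+m) UNIV" "prob ((V - GV) \<union> (GV - V)) < \<epsilon>/8"
  proof -
    have "\<exists>G\<in>fam (k+m) UNIV. prob ((V - G) \<union> (G - V)) < \<epsilon>/8"
    proof (rule approx_fam[of UNIV 0 "{k+m..}" "k+m" V "\<epsilon>/8"])
      fix i assume "i \<in> {k+m..}"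
      then show "k + m \<le> i \<and> (\<exists>L\<in>UNIV. i < k + m + L)" by (intro conjI bexI[of _ "Suc i"]) auto
    qed (use V e8 in auto)
    then show ?thesis using that by blast
  qed
  obtain l0 Q0 where GUe: "GU = {x \<in> space \<mu>. map (idx l0) (block x 0 (k+1)) \<in> Q0}"
    using GU(1) unfolding fam_def by blast
  obtain l1 L1 Q1 where GVe: "GV = {x \<in> space \<mu>. map (idx l1) (block x (k+m) L1) \<in> Q1}"
    using GV(1) unfolding fam_def by blast
  have Ue: "U \<in> events" "V \<in> events" using U V coord_sigma_sets by blast+
  have Ge: "GU \<in> events" "GV \<in> events" using GU(1) GV(1) fam_events by blast+
  have "\<bar>(prob (U \<inter> V) - prob U * prob V) - (prob (GU \<inter> GV) - prob GU * prob GV)\<bar> < \<epsilon>/2"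
    using cov_perturb[OF Ue Ge] GU(2) GV(2) by linarith
  then have cG: "alpha_mix \<mu> m - \<epsilon> < \<bar>prob (GU \<inter> GV) - prob GU * prob GV\<bar>" using cUV by linarith
  have ev1: "eventually (\<lambda>t. max l0 l1 \<le> l t) sequentially" using lt unfolding filterlim_at_top by blast
  have ev2: "eventually (\<lambda>t. k + m + L1 + 1 \<le> n t) sequentially" using nt unfolding filterlim_at_top by blast
  show ?thesis using ev1 ev2
  proof eventually_elim
    case (elim t)
    define lt where "lt = l t"
    define L where "L = n t - m - (k+1) + 1"
    have l0: "l0 \<le> lt" and l1: "l1 \<le> lt" using elim by (auto simp: lt_def)
    have LL: "L1 \<le> L" and kk: "k + 1 \<le> n t - m" using elim by (auto simp: L_def)
    define A where "A = {v \<in> ubox (k+1). map (idx lt) v \<in> {c. map (\<lambda>a. a div 2^(lt-l0)) (take (k+1) c) \<in> Q0}}"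
    define B where "B = {v \<in> ubox L. map (idx lt) v \<in> {c. map (\<lambda>a. a div 2^(lt-l1)) (take L1 c) \<in> Q1}}"
    have A: "A \<in> Dcal (k+1) lt" unfolding A_def by (rule Dcal_intro)
    have B: "B \<in> Dcal L lt" unfolding B_def by (rule Dcal_intro)
    have mem: "(k+1, A, B) \<in> idxset (n t) lt m" using A B kk by (simp add: idxset_def L_def)
    have EA: "Ev 0 (k+1) A = GU" unfolding A_def GUe by (rule Ev_lift[OF l0 order_refl])
    have EB: "Ev (k+m) L B = GV" unfolding B_def GVe by (rule Ev_lift[OF l1 LL])
    have pB: "prob (Ev 0 L B) = prob GV" using Ev_shift[OF B, of "k+m"] EB by simp
    have "gpop (n t) m (k+1) A B = \<bar>prob (GU \<inter> GV) - prob GU * prob GV\<bar>"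
      unfolding gpop_def using EA EB pB by (simp add: L_def)
    then have "alpha_mix \<mu> m - \<epsilon> < gpop (n t) m (k+1) A B" using cG by simp
    also have "\<dots> \<le> astar (n t) lt m" by (rule astar_ge[OF mem])
    finally show ?case by (simp add: lt_def)
  qed
qed

lemma astar_sum_lim:
  assumes sm: "summable (\<lambda>m. alpha_mix \<mu> (Suc m))" and M: "strict_mono M" and nM: "\<And>t. M t < n t"
    and lt: "filterlim l at_top sequentially" and nt: "filterlim n at_top sequentially"
  shows "(\<lambda>t. \<Sum>m=1..M t. astar (n t) (l t) m) \<longlonglongrightarrow> alpha_norm \<mu>"
proof -
  define a where "a = (\<lambda>d. alpha_mix \<mu> (Suc d))"
  have an: "alpha_norm \<mu> = suminf a" unfolding alpha_norm_def a_def ..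
  have sa: "summable a" using sm by (simp add: a_def)
  show ?thesis unfolding an tendsto_iff dist_real_def
  proof (intro allI impI)
    fix r :: real assume r: "0 < r"
    have up: "(\<Sum>m=1..M t. astar (n t) (l t) m) \<le> suminf a" for t
    proof -
      have "(\<Sum>m=1..M t. astar (n t) (l t) m) \<le> (\<Sum>m=1..M t. alpha_mix \<mu> m)"
      proof (rule sum_mono)
        fix m assume "m \<in> {1..M t}"
        then show "astar (n t) (l t) m \<le> alpha_mix \<mu> m" using astar_le nM[of t] by auto
      qed
      also have "\<dots> = (\<Sum>d<M t. a d)" unfolding a_def by (rule sum_bounds_lt_plus1[symmetric])
      also have "\<dots> \<le> suminf a" by (rule sum_le_suminf) (use sa alpha_nonneg in \<open>auto simp: a_def\<close>)
      finally show ?thesis .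
    qed
    have "0 < r/2" using r by simp
    from summable_LIMSEQ[OF sa, THEN tendstoD, OF this]
    obtain K where K: "\<bar>(\<Sum>d<K. a d) - suminf a\<bar> < r/2"
      by (auto simp: eventually_sequentially dist_real_def)
    define \<eta> where "\<eta> = r / (2 * (real K + 1))"
    have \<eta>: "0 < \<eta>" using r by (simp add: \<eta>_def)
    have Kh: "real K * \<eta> < r/2"
    proof -
      have "real K * \<eta> = (r/2) * (real K / (real K + 1))" by (simp add: \<eta>_def field_simps)
      also have "\<dots> < (r/2) * 1" using r by (intro mult_strict_left_mono) auto
      finally show ?thesis by simp
    qed
    have ev1: "eventually (\<lambda>t. \<forall>m\<in>{1..K}. alpha_mix \<mu> m - \<eta> < astar (n t) (l t) m) sequentially"
      by (rule eventually_ball_finite) (use astar_lower[OF _ \<eta> lt nt] in auto)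
    have ev2: "eventually (\<lambda>t. K \<le> M t) sequentially"
      unfolding eventually_sequentially using seq_suble[OF M] le_trans by blast
    show "eventually (\<lambda>t. \<bar>(\<Sum>m=1..M t. astar (n t) (l t) m) - suminf a\<bar> < r) sequentially"
      using ev1 ev2
    proof eventually_elim
      case (elim t)
      have "(\<Sum>m=1..K. alpha_mix \<mu> m - \<eta>) \<le> (\<Sum>m=1..K. astar (n t) (l t) m)"
        by (rule sum_mono) (use elim in \<open>auto intro: less_imp_le\<close>)
      also have "\<dots> \<le> (\<Sum>m=1..M t. astar (n t) (l t) m)"
      proof (rule sum_mono2)
        show "{1..K} \<subseteq> {1..M t}" using elim by auto
        fix m assume "m \<in> {1..M t} - {1..K}"
        then show "0 \<le> astar (n t) (l t) m" using astar_nonneg nM[of t] by auto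
      qed simp
      finally have lo: "(\<Sum>m=1..K. alpha_mix \<mu> m - \<eta>) \<le> (\<Sum>m=1..M t. astar (n t) (l t) m)" .
      have "(\<Sum>m=1..K. alpha_mix \<mu> m - \<eta>) = (\<Sum>d<K. a d) - real K * \<eta>"
        by (simp add: sum_subtractf a_def sum_bounds_lt_plus1)
      then show ?case using lo up[of t] K Kh by linarith
    qed
  qed
qed

end


lemma Max_diff_le:
  fixes f g :: "'a \<Rightarrow> real"
  assumes X: "finite X" "X \<noteq> {}" and d: "\<And>x. x \<in> X \<Longrightarrow> \<bar>f x - g x\<bar> \<le> c"
  shows "\<bar>Max (f ` X) - Max (g ` X)\<bar> \<le> c"
proof -
  have "Max (f ` X) \<in> f ` X" using X by (intro Max_in) auto
  then obtain x0 where x0: "x0 \<in> X" "Max (f ` X) = f x0" by auto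
  have "Max (g ` X) \<in> g ` X" using X by (intro Max_in) auto
  then obtain y0 where y0: "y0 \<in> X" "Max (g ` X) = g y0" by auto
  have "g x0 \<le> Max (g ` X)" using X x0 by (intro Max_ge) auto
  moreover have "f y0 \<le> Max (f ` X)" using X y0 by (intro Max_ge) auto
  moreover have "\<bar>f x0 - g x0\<bar> \<le> c" "\<bar>f y0 - g y0\<bar> \<le> c" using d x0 y0 by auto
  ultimately show ?thesis using x0 y0 by linarith
qed

lemma prod_dev:
  fixes a b a' b' :: real
  assumes "0 \<le> b" "b \<le> 1" "0 \<le> a'" "a' \<le> 1"
  shows "\<bar>a * b - a' * b'\<bar> \<le> \<bar>a - a'\<bar> + \<bar>b - b'\<bar>"
proof -
  have "a * b - a' * b' = (a - a') * b + a' * (b - b')" by (simp add: algebra_simps)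
  then have "\<bar>a * b - a' * b'\<bar> \<le> \<bar>a - a'\<bar> * b + a' * \<bar>b - b'\<bar>"
    using assms by (simp add: abs_mult) (metis abs_mult abs_of_nonneg abs_triangle_ineq)
  also have "\<dots> \<le> \<bar>a - a'\<bar> * 1 + 1 * \<bar>b - b'\<bar>"
    using assms by (intro add_mono mult_mono) auto
  finally show ?thesis by simp
qed

context setting
begin

definition avg :: "nat \<Rightarrow> (nat \<Rightarrow> (nat \<Rightarrow> real) set) \<Rightarrow> (nat \<Rightarrow> real) \<Rightarrow> real" where
  "avg t E x = (1 / real t) * (\<Sum>i<t. indicator (E i) x)"

definition dev :: "nat \<Rightarrow> (nat \<Rightarrow> (nat \<Rightarrow> real) set) \<Rightarrow> real \<Rightarrow> real \<Rightarrow> (nat \<Rightarrow> real) set" where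
  "dev t E p \<eta> = {x \<in> space \<mu>. \<eta> \<le> \<bar>avg t E x - p\<bar>}"

definition Em :: "nat \<Rightarrow> real list set \<Rightarrow> nat \<Rightarrow> (nat \<Rightarrow> real) set" where
  "Em K B i = Ev (i*K) K B"

definition Eg :: "nat \<Rightarrow> nat \<Rightarrow> nat \<Rightarrow> real list set \<Rightarrow> real list set \<Rightarrow> nat \<Rightarrow> (nat \<Rightarrow> real) set" where
  "Eg n m j A B i = Ev (i*n) j A \<inter> Ev (i*n + j + m - 1) (n-m-j+1) B"

lemma ind_Ev: "x \<in> space \<mu> \<Longrightarrow> indicator B (block x s K) = (indicator (Ev s K B) x :: real)"
  by (simp add: Ev_def indicator_def)

lemma emp_mu_eq: "x \<in> space \<mu> \<Longrightarrow> emp_mu t x K B = avg t (Em K B) x"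
  by (simp add: emp_mu_def avg_def Em_def ind_Ev)

lemma emp_gamma_eq: "x \<in> space \<mu> \<Longrightarrow> emp_gamma t n m j x A B = avg t (Eg n m j A B) x"
  by (simp add: emp_gamma_def avg_def Eg_def ind_Ev indicator_inter_arith)

lemma avg01: "0 < t \<Longrightarrow> 0 \<le> avg t E x \<and> avg t E x \<le> 1"
proof -
  assume t: "0 < t"
  have "(\<Sum>i<t. indicator (E i) x :: real) \<le> (\<Sum>i<t. 1)" by (rule sum_mono) (simp add: indicator_def)
  moreover have "0 \<le> (\<Sum>i<t. indicator (E i) x :: real)" by (rule sum_nonneg) simp
  ultimately show ?thesis using t by (simp add: avg_def field_simps)
qed

lemma dev_sets:
  assumes "\<And>i. E i \<in> events"
  shows "dev t E p \<eta> \<in> events"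
proof -
  have "(\<lambda>x. avg t E x) \<in> borel_measurable \<mu>"
    unfolding avg_def using assms
    by (intro borel_measurable_times borel_measurable_const borel_measurable_sum borel_measurable_indicator) auto
  then show ?thesis unfolding dev_def by measurable
qed

lemma conc_blocks:
  assumes sa: "summable (\<lambda>d. alpha_mix \<mu> (Suc d))"
    and K: "1 \<le> K" and t: "0 < t" and \<eta>: "0 < \<eta>"
    and E: "\<And>i. E i \<in> coord_sigma \<mu> {i*K..<i*K+K}" and pE: "\<And>i. prob (E i) = p"
  shows "prob (dev t E p \<eta>) \<le> (1 + 2 * alpha_norm \<mu>) / (real t * \<eta>\<^sup>2)"
proof -
  have Ee: "\<And>i. E i \<in> events" using E coord_sigma_sets by blast
  have "prob {x \<in> space \<mu>. \<eta> \<le> \<bar>(1 / real t) * (\<Sum>i<t. indicator (E i) x) - p\<bar>}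
      \<le> (1 + 2 * (\<Sum>d. alpha_mix \<mu> (Suc d))) / (real t * \<eta>\<^sup>2)"
  proof (rule conc[OF t Ee pE _ alpha_nonneg sa \<eta>])
    fix i k assume "i < k" "k < t"
    show "\<bar>prob (E i \<inter> E k) - p * p\<bar> \<le> alpha_mix \<mu> (k - i)"
      using cov_blocks[OF K \<open>i < k\<close> E E] pE by simp
  qed
  then show ?thesis by (simp add: dev_def avg_def alpha_norm_def)
qed

lemma Em_in: "B \<in> Dcal K l \<Longrightarrow> Em K B i \<in> coord_sigma \<mu> {i*K..<i*K+K}"
  unfolding Em_def Ev_def by (rule Ev_in) auto

lemma Em_prob: "B \<in> Dcal K l \<Longrightarrow> prob (Em K B i) = prob (Ev 0 K B)"
  unfolding Em_def by (rule Ev_shift)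

lemma Eg_in:
  assumes "(j, A, B) \<in> idxset n l m" "1 \<le> m"
  shows "Eg n m j A B i \<in> coord_sigma \<mu> {i*n..<i*n+n}"
proof -
  have j: "1 \<le> j" "j \<le> n - m" and A: "A \<in> Dcal j l" and B: "B \<in> Dcal (n - m - j + 1) l"
    using assms by (auto simp: idxset_def)
  interpret S: sigma_algebra "space \<mu>" "coord_sigma \<mu> {i*n..<i*n+n}" by (rule csig_alg)
  have 1: "Ev (i*n) j A \<in> coord_sigma \<mu> {i*n..<i*n+n}" unfolding Ev_def
    by (rule Ev_in[OF A]) (use j in auto)
  have 2: "Ev (i*n + j + m - 1) (n-m-j+1) B \<in> coord_sigma \<mu> {i*n..<i*n+n}" unfolding Ev_def
    by (rule Ev_in[OF B]) (use j assms(2) in auto)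
  show ?thesis unfolding Eg_def using 1 2 by (rule S.Int)
qed

lemma Eg_prob:
  assumes "(j, A, B) \<in> idxset n l m" "1 \<le> m"
  shows "prob (Eg n m j A B i) = prob (Eg n m j A B 0)"
proof -
  have A: "A \<in> Dcal j l" and B: "B \<in> Dcal (n - m - j + 1) l" using assms by (auto simp: idxset_def)
  have s: "{x \<in> space \<mu>. block x 0 j \<in> A \<and> block x (j+m-1) (n-m-j+1) \<in> B} \<in> sets \<mu>"
  proof -
    have "{x \<in> space \<mu>. block x 0 j \<in> A \<and> block x (j+m-1) (n-m-j+1) \<in> B}
        = {x \<in> space \<mu>. block x 0 j \<in> A} \<inter> {x \<in> space \<mu>. block x (j+m-1) (n-m-j+1) \<in> B}" by auto
    then show ?thesis using Ev_sets[OF A] Ev_sets[OF B] by auto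
  qed
  have e: "i*n + j + m - 1 = (j + m - 1) + i*n" using assms(2) by simp
  have "prob (Eg n m j A B i) = prob {x \<in> space \<mu>. block (T (i*n) x) 0 j \<in> A \<and> block (T (i*n) x) (j+m-1) (n-m-j+1) \<in> B}"
    unfolding Eg_def Ev_def block_T e by (rule arg_cong[where f = prob]) auto
  also have "\<dots> = prob {x \<in> space \<mu>. block x 0 j \<in> A \<and> block x (j+m-1) (n-m-j+1) \<in> B}"
    by (rule measure_T[OF s])
  also have "\<dots> = prob (Eg n m j A B 0)" unfolding Eg_def Ev_def by (rule arg_cong[where f = prob]) auto
  finally show ?thesis .
qed

end


lemma pow_sum_le:
  assumes a: "1 \<le> a" and b: "1 \<le> b"
  shows "(2::nat)^a + 2^b \<le> 2^(a+b-1) + 2"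
proof -
  obtain a' where a': "a = Suc a'" using a by (cases a) auto
  obtain b' where b': "b = Suc b'" using b by (cases b) auto
  define p :: nat where "p = 2^(a-1)"
  define q :: nat where "q = 2^(b-1)"
  have p1: "1 \<le> p" and q1: "1 \<le> q" by (simp_all add: p_def q_def)
  have ea: "(2::nat)^a = 2 * p" by (simp add: p_def a')
  have eb: "(2::nat)^b = 2 * q" by (simp add: q_def b')
  have eab: "(2::nat)^(a+b-1) = 2 * p * q"
  proof -
    have "a + b - 1 = Suc (a' + b')" using a' b' by simp
    then show ?thesis by (simp add: p_def q_def power_add a' b')
  qed
  have "p * q = (p - 1) * q + q" using p1 by (simp add: diff_mult_distrib)
  moreover have "(p - 1) * q \<ge> p - 1" using q1 by simp
  ultimately have "p + q \<le> p * q + 1" by linarith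
  then show ?thesis unfolding ea eb eab by linarith
qed

lemma three_le: "3 * n \<le> 2^(n-1) + (8::nat)"
proof (induction n)
  case 0 then show ?case by simp
next
  case (Suc n)
  show ?case
  proof (cases "n < 3")
    case True
    then have "n = 0 \<or> n = 1 \<or> n = 2" by auto
    then show ?thesis by auto
  next
    case False
    have "(2::nat)^2 \<le> 2^(n-1)" by (rule power_increasing) (use False in auto)
    then have "(3::nat) \<le> 2^(n-1)" by simp
    moreover have "(2::nat)^(Suc n - 1) = 2 * 2^(n-1)"
    proof -
      obtain n' where "n = Suc n'" using False by (cases n) auto
      then show ?thesis by simp
    qed
    moreover have "3 * Suc n = 3 * n + 3" by simp
    ultimately show ?thesis using Suc.IH by linarith
  qed
qed

lemma cube_le:
  assumes "1 \<le> L"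
  shows "real N ^ 3 \<le> 256 * 2^(2^(N*L - 1))"
proof -
  have "N < 2^N" by (rule less_exp)
  then have "N^3 \<le> (2^N)^3" by (intro power_mono) auto
  also have "((2::nat)^N)^3 = 2^(3*N)" by (simp add: power_mult[symmetric] mult.commute)
  also have "\<dots> \<le> 2^(2^(N-1) + 8)" by (rule power_increasing) (use three_le in auto)
  also have "\<dots> \<le> 2^(2^(N*L-1) + 8)"
  proof -
    have "N - 1 \<le> N*L - 1" using assms by (simp add: diff_le_mono)
    then have "(2::nat)^(N-1) \<le> 2^(N*L-1)" by (rule power_increasing) simp
    then show ?thesis by (intro power_increasing) auto
  qed
  also have "\<dots> = 256 * 2^(2^(N*L-1))" by (simp add: power_add)
  finally have "N^3 \<le> 256 * 2^(2^(N*L-1))" .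
  then have "real (N^3) \<le> real (256 * 2^(2^(N*L-1)))" by (simp only: of_nat_le_iff)
  then show ?thesis by simp
qed

lemma final_arith:
  fixes Mv N k W e d V :: real
  assumes Mv: "1 \<le> Mv" "Mv \<le> N" and e: "0 < e" and d: "0 < d" and V: "0 \<le> V" and W: "0 < W"
    and N3: "N^3 \<le> 256 * W" and k: "Mv * W^2 / (e^2 * d) \<le> k"
  shows "Mv * (4 * N * W * (3 * V / (k * (e / Mv)^2))) \<le> 3072 * V * d"
proof -
  have kpos: "0 < Mv * W^2 / (e^2 * d)" using Mv e d W by simp
  have k0: "0 < k" using kpos k by linarith
  have "W^2 / (d * Mv) = (Mv * W^2 / (e^2 * d)) * (e / Mv)^2"
    using Mv e d by (simp add: field_simps power2_eq_square)
  also have "\<dots> \<le> k * (e / Mv)^2" by (rule mult_right_mono[OF k]) simp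
  finally have ke: "W^2 / (d * Mv) \<le> k * (e / Mv)^2" .
  have pos1: "0 < W^2 / (d * Mv)" using W d Mv by simp
  have kp: "0 < k * (e / Mv)^2" using pos1 ke by linarith
  have "3 * V / (k * (e / Mv)^2) \<le> 3 * V / (W^2 / (d * Mv))"
    by (rule divide_left_mono[OF ke]) (use V mult_pos_pos[OF kp pos1] in auto)
  also have "\<dots> = 3 * V * d * Mv / W^2" using W d Mv by (simp add: field_simps)
  finally have b1: "3 * V / (k * (e / Mv)^2) \<le> 3 * V * d * Mv / W^2" .
  have N0: "0 \<le> N" using Mv by linarith
  have "Mv * (4 * N * W * (3 * V / (k * (e / Mv)^2))) \<le> Mv * (4 * N * W * (3 * V * d * Mv / W^2))"
    by (intro mult_left_mono b1) (use Mv N0 W in auto)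
  also have "\<dots> = 12 * V * d * (Mv^2 * N) / W" using W by (simp add: field_simps power2_eq_square)
  also have "\<dots> \<le> 12 * V * d * (N^3) / W"
  proof -
    have "Mv^2 \<le> N^2" using Mv by (intro power_mono) auto
    then have "Mv^2 * N \<le> N^2 * N" by (rule mult_right_mono) (use N0 in simp)
    then have "Mv^2 * N \<le> N^3" by (simp add: power3_eq_cube power2_eq_square)
    then show ?thesis using V d W by (intro divide_right_mono mult_left_mono) auto
  qed
  also have "\<dots> \<le> 12 * V * d * (256 * W) / W"
    using N3 V d W by (intro divide_right_mono mult_left_mono) auto
  also have "\<dots> = 3072 * V * d" using W by simp
  finally show ?thesis .
qed

context setting
begin

lemma card_idxset:
  assumes l: "1 \<le> l" and m: "1 \<le> m" and mn: "m < n"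
  shows "card (idxset n l m) \<le> n * 2^(2^(n*l - 1) + 2)"
proof -
  have fin: "finite (Sigma {1..n-m} (\<lambda>j. Dcal j l \<times> Dcal (n - m - j + 1) l))"
    by (intro finite_SigmaI finite_cartesian_product finite_Dcal) simp
  have "card (idxset n l m) \<le> card (Sigma {1..n-m} (\<lambda>j. Dcal j l \<times> Dcal (n - m - j + 1) l))"
    by (rule card_mono[OF fin]) (auto simp: idxset_def)
  also have "\<dots> = (\<Sum>j\<in>{1..n-m}. card (Dcal j l) * card (Dcal (n - m - j + 1) l))"
    by (simp add: card_cartesian_product finite_Dcal)
  also have "\<dots> \<le> (\<Sum>j\<in>{1..n-m}. (2::nat)^(2^(n*l - 1) + 2))"
  proof (rule sum_mono)
    fix j assume j: "j \<in> {1..n-m}"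
    define L where "L = n - m - j + 1"
    have "card (Dcal j l) * card (Dcal L l) \<le> 2^(2^(j*l)) * 2^(2^(L*l))"
      by (intro mult_le_mono card_Dcal)
    also have "\<dots> = 2^(2^(j*l) + 2^(L*l))" by (simp add: power_add)
    also have "\<dots> \<le> 2^(2^(j*l + L*l - 1) + 2)"
      by (intro power_increasing pow_sum_le) (use j l in \<open>auto simp: L_def\<close>)
    also have "\<dots> \<le> 2^(2^(n*l - 1) + 2)"
    proof -
      have "j + L \<le> n" using j m mn by (auto simp: L_def)
      then have "(j + L)*l \<le> n*l" by (rule mult_le_mono1)
      then have "j*l + L*l \<le> n*l" by (simp add: add_mult_distrib)
      then have "j*l + L*l - 1 \<le> n*l - 1" by simp
      then have "(2::nat)^(j*l + L*l - 1) \<le> 2^(n*l - 1)" by (rule power_increasing) simp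
      then show ?thesis by (intro power_increasing) auto
    qed
    finally show "card (Dcal j l) * card (Dcal (n - m - j + 1) l) \<le> 2^(2^(n*l - 1) + 2)" by (simp add: L_def)
  qed
  also have "\<dots> = (n - m) * 2^(2^(n*l - 1) + 2)" by simp
  also have "\<dots> \<le> n * 2^(2^(n*l - 1) + 2)" by simp
  finally show ?thesis .
qed

end


context setting
begin

lemma pointwise_dev:
  assumes t: "0 < t" and m: "1 \<le> m" and jAB: "(j, A, B) \<in> idxset n l m" and x: "x \<in> space \<mu>"
    and d1: "\<bar>emp_gamma t n m j x A B - prob (Eg n m j A B 0)\<bar> \<le> \<eta>"
    and d2: "\<bar>emp_mu t x j A - prob (Ev 0 j A)\<bar> \<le> \<eta>"
    and d3: "\<bar>emp_mu t x (n - m - j + 1) B - prob (Ev 0 (n - m - j + 1) B)\<bar> \<le> \<eta>"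
  shows "\<bar>\<bar>emp_gamma t n m j x A B - emp_mu t x j A * emp_mu t x (n - m - j + 1) B\<bar> - gpop n m j A B\<bar> \<le> 3 * \<eta>"
proof -
  define g where "g = emp_gamma t n m j x A B"
  define a where "a = emp_mu t x j A"
  define b where "b = emp_mu t x (n - m - j + 1) B"
  define pg where "pg = prob (Eg n m j A B 0)"
  define pa where "pa = prob (Ev 0 j A)"
  define pb where "pb = prob (Ev 0 (n - m - j + 1) B)"
  have gp: "gpop n m j A B = \<bar>pg - pa * pb\<bar>"
    unfolding gpop_def pg_def pa_def pb_def Eg_def by simp
  have bavg: "b = avg t (Em (n - m - j + 1) B) x" unfolding b_def by (rule emp_mu_eq[OF x])
  have b01: "0 \<le> b \<and> b \<le> 1" unfolding bavg by (rule avg01[OF t])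
  have pa01: "0 \<le> pa \<and> pa \<le> 1" unfolding pa_def by simp
  have d1': "\<bar>g - pg\<bar> \<le> \<eta>" unfolding g_def pg_def by (rule d1)
  have d2': "\<bar>a - pa\<bar> \<le> \<eta>" unfolding a_def pa_def by (rule d2)
  have d3': "\<bar>b - pb\<bar> \<le> \<eta>" unfolding b_def pb_def by (rule d3)
  have "\<bar>\<bar>g - a * b\<bar> - \<bar>pg - pa * pb\<bar>\<bar> \<le> \<bar>(g - a * b) - (pg - pa * pb)\<bar>" by (rule abs_triangle_ineq3)
  also have "(g - a * b) - (pg - pa * pb) = (g - pg) - (a * b - pa * pb)" by simp
  also have "\<bar>(g - pg) - (a * b - pa * pb)\<bar> \<le> \<bar>g - pg\<bar> + \<bar>a * b - pa * pb\<bar>" by (rule abs_triangle_ineq4)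
  also have "\<bar>a * b - pa * pb\<bar> \<le> \<bar>a - pa\<bar> + \<bar>b - pb\<bar>" using b01 pa01 by (intro prod_dev) auto
  also have "\<bar>g - pg\<bar> + (\<bar>a - pa\<bar> + \<bar>b - pb\<bar>) \<le> \<eta> + (\<eta> + \<eta>)" by (intro add_mono d1' d2' d3')
  finally have "\<bar>\<bar>g - a * b\<bar> - \<bar>pg - pa * pb\<bar>\<bar> \<le> 3 * \<eta>" by simp
  then show ?thesis unfolding gp g_def a_def b_def .
qed

lemma alpha_hat_idx:
  "alpha_hat t n l x m = Max ((\<lambda>(j, A, B). \<bar>emp_gamma t n m j x A B - emp_mu t x j A * emp_mu t x (n - m - j + 1) B\<bar>) ` idxset n l m)"
  unfolding alpha_hat_def idxset_def ..

theorem main_loc: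
  fixes l n M :: "nat \<Rightarrow> nat" and \<delta> \<epsilon> :: "nat \<Rightarrow> real"
  assumes sa: "alpha_summable \<mu>"
    and lt: "filterlim l at_top sequentially" and l0: "\<And>t. l t > 0"
    and nt: "filterlim n at_top sequentially"
    and Ms: "strict_mono M" and M0: "\<And>t. M t > 0" and nM: "\<And>t. n t > M t"
    and \<delta>0: "\<And>t. \<delta> t > 0" and s\<delta>: "summable \<delta>" and \<epsilon>0: "\<And>t. \<epsilon> t > 0" and \<epsilon>l: "\<epsilon> \<longlonglongrightarrow> 0"
  shows "AE x in \<mu>. (\<lambda>t. theta l n M \<epsilon> \<delta> t x) \<longlonglongrightarrow> alpha_norm \<mu>"
proof -
  define \<kappa> where "\<kappa> t = kappa l n M \<epsilon> \<delta> t" for t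
  define \<eta> where "\<eta> t = \<epsilon> t / real (M t)" for t
  define V where "V = 1 + 2 * alpha_norm \<mu>"
  have sa': "summable (\<lambda>d. alpha_mix \<mu> (Suc d))" using sa by (simp add: alpha_summable_def)
  have an0: "0 \<le> alpha_norm \<mu>" unfolding alpha_norm_def
    by (rule suminf_nonneg[OF sa']) (rule alpha_nonneg)
  have V0: "0 \<le> V" using an0 by (simp add: V_def)
  have \<eta>0: "0 < \<eta> t" for t using \<epsilon>0[of t] M0[of t] by (simp add: \<eta>_def)
  have Cpos: "0 < C_const (M t) (l t) (n t)" for t using M0[of t] by (simp add: C_const_def)
  have \<kappa>ge: "C_const (M t) (l t) (n t) / ((\<epsilon> t)^2 * \<delta> t) \<le> real (\<kappa> t)" for t
  proof -
    define r where "r = C_const (M t) (l t) (n t) / ((\<epsilon> t)^2 * \<delta> t)"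
    have r0: "0 < r" unfolding r_def using Cpos[of t] \<epsilon>0[of t] \<delta>0[of t] by simp
    have "real (\<kappa> t) = real (nat \<lceil>r\<rceil>)" by (simp add: \<kappa>_def kappa_def r_def)
    also have "\<dots> = real_of_int \<lceil>r\<rceil>" using r0 by simp
    finally show ?thesis using le_of_int_ceiling[of r] by (simp add: r_def)
  qed
  have \<kappa>0: "0 < \<kappa> t" for t
  proof -
    have "0 < C_const (M t) (l t) (n t) / ((\<epsilon> t)^2 * \<delta> t)" using Cpos[of t] \<epsilon>0[of t] \<delta>0[of t] by simp
    then show ?thesis using \<kappa>ge[of t] by linarith
  qed
  define D where "D t m j A B = dev (\<kappa> t) (Eg (n t) m j A B) (prob (Eg (n t) m j A B 0)) (\<eta> t)
      \<union> dev (\<kappa> t) (Em j A) (prob (Ev 0 j A)) (\<eta> t)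
      \<union> dev (\<kappa> t) (Em (n t - m - j + 1) B) (prob (Ev 0 (n t - m - j + 1) B)) (\<eta> t)" for t m j A B
  define Bad where "Bad t = (\<Union>m\<in>{1..M t}. \<Union>p\<in>idxset (n t) (l t) m. case p of (j, A, B) \<Rightarrow> D t m j A B)" for t
  have Dinfo: "D t m j A B \<in> events \<and> prob (D t m j A B) \<le> 3 * (V / (real (\<kappa> t) * (\<eta> t)^2))"
    if m: "1 \<le> m" and jAB: "(j, A, B) \<in> idxset (n t) (l t) m" for t m j A B
  proof -
    have j: "1 \<le> j" "j \<le> n t - m" and A: "A \<in> Dcal j (l t)" and B: "B \<in> Dcal (n t - m - j + 1) (l t)"
      using jAB by (auto simp: idxset_def)
    have n1: "1 \<le> n t" using nM[of t] by simp
    have EgE: "Eg (n t) m j A B i \<in> events" for i using Eg_in[OF jAB m] coord_sigma_sets by blast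
    have EmA: "Em j A i \<in> events" for i using Em_in[OF A] coord_sigma_sets by blast
    have EmB: "Em (n t - m - j + 1) B i \<in> events" for i using Em_in[OF B] coord_sigma_sets by blast
    have e1: "dev (\<kappa> t) (Eg (n t) m j A B) (prob (Eg (n t) m j A B 0)) (\<eta> t) \<in> events" by (rule dev_sets[OF EgE])
    have e2: "dev (\<kappa> t) (Em j A) (prob (Ev 0 j A)) (\<eta> t) \<in> events" by (rule dev_sets[OF EmA])
    have e3: "dev (\<kappa> t) (Em (n t - m - j + 1) B) (prob (Ev 0 (n t - m - j + 1) B)) (\<eta> t) \<in> events"
      by (rule dev_sets[OF EmB])
    have p1: "prob (dev (\<kappa> t) (Eg (n t) m j A B) (prob (Eg (n t) m j A B 0)) (\<eta> t)) \<le> V / (real (\<kappa> t) * (\<eta> t)^2)"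
      unfolding V_def by (rule conc_blocks[OF sa' n1 \<kappa>0 \<eta>0 Eg_in[OF jAB m] Eg_prob[OF jAB m]])
    have p2: "prob (dev (\<kappa> t) (Em j A) (prob (Ev 0 j A)) (\<eta> t)) \<le> V / (real (\<kappa> t) * (\<eta> t)^2)"
      unfolding V_def by (rule conc_blocks[OF sa' j(1) \<kappa>0 \<eta>0 Em_in[OF A] Em_prob[OF A]])
    have p3: "prob (dev (\<kappa> t) (Em (n t - m - j + 1) B) (prob (Ev 0 (n t - m - j + 1) B)) (\<eta> t)) \<le> V / (real (\<kappa> t) * (\<eta> t)^2)"
      unfolding V_def by (rule conc_blocks[OF sa' _ \<kappa>0 \<eta>0 Em_in[OF B] Em_prob[OF B]]) simp
    have "prob (D t m j A B) \<le> prob (dev (\<kappa> t) (Eg (n t) m j A B) (prob (Eg (n t) m j A B 0)) (\<eta> t)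
      \<union> dev (\<kappa> t) (Em j A) (prob (Ev 0 j A)) (\<eta> t)) + prob (dev (\<kappa> t) (Em (n t - m - j + 1) B) (prob (Ev 0 (n t - m - j + 1) B)) (\<eta> t))"
      unfolding D_def by (rule measure_Un_le) (use e1 e2 e3 in auto)
    also have "\<dots> \<le> (prob (dev (\<kappa> t) (Eg (n t) m j A B) (prob (Eg (n t) m j A B 0)) (\<eta> t))
      + prob (dev (\<kappa> t) (Em j A) (prob (Ev 0 j A)) (\<eta> t))) + prob (dev (\<kappa> t) (Em (n t - m - j + 1) B) (prob (Ev 0 (n t - m - j + 1) B)) (\<eta> t))"
      by (intro add_mono measure_Un_le order_refl) (use e1 e2 in auto)
    also have "\<dots> \<le> V / (real (\<kappa> t) * (\<eta> t)^2) + V / (real (\<kappa> t) * (\<eta> t)^2) + V / (real (\<kappa> t) * (\<eta> t)^2)"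
      by (intro add_mono p1 p2 p3)
    finally have "prob (D t m j A B) \<le> 3 * (V / (real (\<kappa> t) * (\<eta> t)^2))" by simp
    moreover have "D t m j A B \<in> events" unfolding D_def using e1 e2 e3 by auto
    ultimately show ?thesis by blast
  qed
  have inner_ev: "(\<Union>p\<in>idxset (n t) (l t) m. case p of (j, A, B) \<Rightarrow> D t m j A B) \<in> events" if m: "1 \<le> m" for t m
    by (rule sets.finite_UN[OF finite_idxset]) (use Dinfo[OF m] in auto)
  have Bad_ev: "Bad t \<in> events" for t
    unfolding Bad_def by (rule sets.finite_UN) (use inner_ev in auto)
  have Bad_prob: "prob (Bad t) \<le> 3072 * V * \<delta> t" for t
  proof -
    define c where "c = 3 * (V / (real (\<kappa> t) * (\<eta> t)^2))"
    define X :: nat where "X = 2^(n t * l t - 1)"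
    define W :: real where "W = 2^X"
    have c0: "0 \<le> c" unfolding c_def using V0 by simp
    have W0: "0 < W" by (simp add: W_def)
    have l1: "1 \<le> l t" using l0[of t] by simp
    have cardb: "real (card (idxset (n t) (l t) m)) \<le> 4 * real (n t) * W" if m: "1 \<le> m" "m < n t" for m
    proof -
      have "card (idxset (n t) (l t) m) \<le> n t * 2^(X + 2)"
        unfolding X_def by (rule card_idxset[OF l1 m])
      then have "real (card (idxset (n t) (l t) m)) \<le> real (n t * 2^(X + 2))" by (simp only: of_nat_le_iff)
      then show ?thesis by (simp add: W_def power_add)
    qed
    have inner: "prob (\<Union>p\<in>idxset (n t) (l t) m. case p of (j, A, B) \<Rightarrow> D t m j A B) \<le> 4 * real (n t) * W * c"
      if m: "m \<in> {1..M t}" for m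
    proof -
      have m1: "1 \<le> m" and mn: "m < n t" using m nM[of t] by auto
      have "prob (\<Union>p\<in>idxset (n t) (l t) m. case p of (j, A, B) \<Rightarrow> D t m j A B)
          \<le> (\<Sum>p\<in>idxset (n t) (l t) m. prob (case p of (j, A, B) \<Rightarrow> D t m j A B))"
        by (rule measure_UNION_le[OF finite_idxset]) (use Dinfo[OF m1] in auto)
      also have "\<dots> \<le> (\<Sum>p\<in>idxset (n t) (l t) m. c)"
        by (rule sum_mono) (use Dinfo[OF m1] in \<open>auto simp: c_def\<close>)
      also have "\<dots> = real (card (idxset (n t) (l t) m)) * c" by simp
      also have "\<dots> \<le> 4 * real (n t) * W * c" by (rule mult_right_mono[OF cardb[OF m1 mn] c0])
      finally show ?thesis .
    qed
    have "prob (Bad t) \<le> (\<Sum>m\<in>{1..M t}. prob (\<Union>p\<in>idxset (n t) (l t) m. case p of (j, A, B) \<Rightarrow> D t m j A B))"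
      unfolding Bad_def by (rule measure_UNION_le) (use inner_ev in auto)
    also have "\<dots> \<le> (\<Sum>m\<in>{1..M t}. 4 * real (n t) * W * c)" by (rule sum_mono) (rule inner)
    also have "\<dots> = real (M t) * (4 * real (n t) * W * (3 * V / (real (\<kappa> t) * (\<epsilon> t / real (M t))^2)))"
      by (simp add: c_def \<eta>_def)
    also have "\<dots> \<le> 3072 * V * \<delta> t"
    proof (rule final_arith)
      show "1 \<le> real (M t)" using M0[of t] by simp
      show "real (M t) \<le> real (n t)" using nM[of t] by simp
      show "real (n t) ^ 3 \<le> 256 * W" unfolding W_def X_def by (rule cube_le[OF l1])
      show "real (M t) * W\<^sup>2 / ((\<epsilon> t)\<^sup>2 * \<delta> t) \<le> real (\<kappa> t)"
      proof -
        have nl: "1 \<le> n t * l t" using nM[of t] l1 by simp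
        obtain q where q: "n t * l t = Suc q" using nl by (cases "n t * l t") auto
        have "(2::nat)^(n t * l t) = 2 * X" unfolding X_def q by simp
        then have "(2::real)^(2^(n t * l t)) = W^2" by (simp add: W_def power_mult[symmetric] mult.commute)
        then have Ce: "C_const (M t) (l t) (n t) = real (M t) * (W\<^sup>2 * (2^(2^(M t * l t + 1)) * 2))"
          unfolding C_const_def by (simp add: power_add)
        define pp :: real where "pp = 2^(2^(M t * l t + 1)) * 2"
        have "(1::real) \<le> 2^(2^(M t * l t + 1))" by (rule one_le_power) simp
        then have pp1: "1 \<le> pp" unfolding pp_def by linarith
        have "W\<^sup>2 = W\<^sup>2 * 1" by simp
        also have "\<dots> \<le> W\<^sup>2 * pp" by (rule mult_left_mono[OF pp1]) simp
        finally have "real (M t) * W\<^sup>2 \<le> real (M t) * (W\<^sup>2 * pp)" by (intro mult_left_mono) simp_all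
        then have "real (M t) * W\<^sup>2 \<le> C_const (M t) (l t) (n t)" unfolding Ce pp_def .
        then have "real (M t) * W\<^sup>2 / ((\<epsilon> t)\<^sup>2 * \<delta> t) \<le> C_const (M t) (l t) (n t) / ((\<epsilon> t)\<^sup>2 * \<delta> t)"
          using \<epsilon>0[of t] \<delta>0[of t] by (intro divide_right_mono) auto
        then show ?thesis using \<kappa>ge[of t] by linarith
      qed
    qed (use \<epsilon>0 \<delta>0 V0 W0 in auto)
    finally show ?thesis .
  qed
  have sumB: "summable (\<lambda>t. prob (Bad t))"
  proof (rule summable_comparison_test[where g = "\<lambda>t. 3072 * V * \<delta> t"])
    show "\<exists>N. \<forall>t\<ge>N. norm (prob (Bad t)) \<le> 3072 * V * \<delta> t" using Bad_prob by auto
    show "summable (\<lambda>t. 3072 * V * \<delta> t)" using s\<delta> by (rule summable_mult)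
  qed
  have BC: "AE x in \<mu>. eventually (\<lambda>t. x \<in> space \<mu> - Bad t) sequentially"
    by (rule borel_cantelli_AE1[OF Bad_ev _ sumB]) (simp add: less_top[symmetric])
  define s where "s t = (\<Sum>m=1..M t. astar (n t) (l t) m)" for t
  have slim: "s \<longlonglongrightarrow> alpha_norm \<mu>" unfolding s_def by (rule astar_sum_lim[OF sa' Ms nM lt nt])
  have good: "\<bar>theta l n M \<epsilon> \<delta> t x - s t\<bar> \<le> 3 * \<epsilon> t" if x: "x \<in> space \<mu> - Bad t" for t x
  proof -
    have xs: "x \<in> space \<mu>" using x by simp
    have each: "\<bar>alpha_hat (\<kappa> t) (n t) (l t) x m - astar (n t) (l t) m\<bar> \<le> 3 * \<eta> t" if m: "m \<in> {1..M t}" for m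
    proof -
      have m1: "1 \<le> m" and mn: "m < n t" using m nM[of t] by auto
      show ?thesis unfolding alpha_hat_idx astar_def
      proof (rule Max_diff_le[OF finite_idxset])
        show "idxset (n t) (l t) m \<noteq> {}" using idxset_ne[OF mn] by blast
        fix p assume p: "p \<in> idxset (n t) (l t) m"
        obtain j A B where pe: "p = (j, A, B)" by (cases p) auto
        have jAB: "(j, A, B) \<in> idxset (n t) (l t) m" using p pe by simp
        have notD: "x \<notin> D t m j A B" using x m p pe unfolding Bad_def by blast
        have dd: "\<not> \<eta> t \<le> \<bar>avg (\<kappa> t) E x - pp\<bar> \<Longrightarrow> \<bar>avg (\<kappa> t) E x - pp\<bar> \<le> \<eta> t" for E pp by simp
        have d1: "\<bar>emp_gamma (\<kappa> t) (n t) m j x A B - prob (Eg (n t) m j A B 0)\<bar> \<le> \<eta> t"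
          using notD xs unfolding D_def dev_def emp_gamma_eq[OF xs] by auto
        have d2: "\<bar>emp_mu (\<kappa> t) x j A - prob (Ev 0 j A)\<bar> \<le> \<eta> t"
          using notD xs unfolding D_def dev_def emp_mu_eq[OF xs] Em_def by auto
        have d3: "\<bar>emp_mu (\<kappa> t) x (n t - m - j + 1) B - prob (Ev 0 (n t - m - j + 1) B)\<bar> \<le> \<eta> t"
          using notD xs unfolding D_def dev_def emp_mu_eq[OF xs] Em_def by auto
        show "\<bar>(case p of (j, A, B) \<Rightarrow> \<bar>emp_gamma (\<kappa> t) (n t) m j x A B - emp_mu (\<kappa> t) x j A * emp_mu (\<kappa> t) x (n t - m - j + 1) B\<bar>)
            - (case p of (j, A, B) \<Rightarrow> gpop (n t) m j A B)\<bar> \<le> 3 * \<eta> t"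
          unfolding pe using pointwise_dev[OF \<kappa>0 m1 jAB xs d1 d2 d3] by simp
      qed
    qed
    have "theta l n M \<epsilon> \<delta> t x - s t = (\<Sum>m=1..M t. alpha_hat (\<kappa> t) (n t) (l t) x m - astar (n t) (l t) m)"
      by (simp add: theta_def s_def \<kappa>_def sum_subtractf)
    then have "\<bar>theta l n M \<epsilon> \<delta> t x - s t\<bar> \<le> (\<Sum>m=1..M t. \<bar>alpha_hat (\<kappa> t) (n t) (l t) x m - astar (n t) (l t) m\<bar>)"
      by (simp add: sum_abs)
    also have "\<dots> \<le> (\<Sum>m=1..M t. 3 * \<eta> t)" by (rule sum_mono) (rule each)
    also have "\<dots> = 3 * \<epsilon> t" using M0[of t] by (simp add: \<eta>_def)
    finally show ?thesis .
  qed
  show ?thesis using BC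
  proof (rule AE_mp, intro AE_I2 impI)
    fix x assume ev: "eventually (\<lambda>t. x \<in> space \<mu> - Bad t) sequentially"
    have "eventually (\<lambda>t. norm (theta l n M \<epsilon> \<delta> t x - s t) \<le> 3 * \<epsilon> t) sequentially"
      using ev by eventually_elim (use good in simp)
    moreover have "(\<lambda>t. 3 * \<epsilon> t) \<longlonglongrightarrow> 0" using tendsto_mult_right_zero[OF \<epsilon>l, of 3] by simp
    ultimately have "(\<lambda>t. theta l n M \<epsilon> \<delta> t x - s t) \<longlonglongrightarrow> 0" by (rule Lim_null_comparison)
    from tendsto_add[OF this slim] show "(\<lambda>t. theta l n M \<epsilon> \<delta> t x) \<longlonglongrightarrow> alpha_norm \<mu>" by simp
  qed
qed

end


theorem theorem2:
  fixes \<mu> :: "(nat \<Rightarrow> real) measure"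
    and l n M :: "nat \<Rightarrow> nat" and \<delta> \<epsilon> :: "nat \<Rightarrow> real"
  assumes "prob_space \<mu>" and "sets \<mu> = sets path_space"
    and "stationary \<mu>"
    and "(\<lambda>m. alpha_mix \<mu> m) \<longlonglongrightarrow> 0"
    and "alpha_summable \<mu>"
    and "mono l" and "filterlim l at_top sequentially" and "\<And>t. l t > 0"
    and "mono n" and "filterlim n at_top sequentially" and "\<And>t. n t > 0"
    and "strict_mono M" and "\<And>t. M t > 0" and "\<And>t. n t > M t"
    and "\<And>t. \<delta> t > 0" and "summable \<delta>"
    and "\<And>t. \<epsilon> t > 0" and "\<epsilon> \<longlonglongrightarrow> 0"
  shows "AE x in \<mu>. (\<lambda>t. theta l n M \<epsilon> \<delta> t x) \<longlonglongrightarrow> alpha_norm \<mu>"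
proof -
  interpret setting \<mu> by (rule setting.intro) (use assms in auto)
  show ?thesis by (rule main_loc) (use assms in auto)
qed

end
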